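(* Let $M\ge2$, $K\ge1$ be integers and let $\gamma_{0d},\sigma_{0d},\gamma_{0r},\sigma_{0r},\gamma_{rd},\sigma_{rd}>0$ ($r=1,\dots,K$) be constants. A message $m\in\{0,\dots,M-1\}$ is encoded as $\mathbf{s}=[s(l-1),s(l)]^T$ with $|s(l-1)|=1$ ($s(l-1)$ known and independent of $m$) and $s(l)=s(l-1)e^{j2\pi m/M}$. The destination observes $$\mathbf{y}_{0d}=\sigma_{0d}\big(\sqrt{\gamma_{0d}}\,h_{0d}\mathbf{s}+\mathbf{n}_{0d}\big),\qquad \mathbf{y}_{rd}=\sigma_{0r}\sigma_{rd}\sqrt{\gamma_{0r}\gamma_{rd}}\,h_{0r}h_{rd}\mathbf{s}+\sigma_{0r}\sigma_{rd}\sqrt{\gamma_{rd}}\,h_{rd}\mathbf{n}_{0r}+\sigma_{rd}\mathbf{n}_{rd},\quad r=1,\dots,K,$$ where $\mathbf{y}_{ij}=[y_{ij}(l-1),y_{ij}(l)]^T$, the scalars $h_{0d},h_{0r},h_{rd}\sim\mathcal{CN}(0,1)$ and the vectors $\mathbf{n}_{0d},\mathbf{n}_{0r},\mathbf{n}_{rd}\sim\mathcal{CN}(\mathbf{0},\mathbf{I}_2)$ ($r=1,\dots,K$) are all mutually independent and independent of $m$. Then the maximum-likelihood detector of $m$ from $(\mathbf{y}_{0d},\mathbf{y}_{1d},\dots,\mathbf{y}_{Kd})$, i.e. $\hat m=\arg\max_m f(\mathbf{y}_{0d},\mathbf{y}_{1d},\dots,\mathbf{y}_{Kd}\mid m)$,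 is equivalently $$\hat m=\arg\max_{m\in\{0,\dots,M-1\}}\Bigg\{\frac{2\gamma_{0d}}{1+2\gamma_{0d}}\frac{\Re\{y_{0d}(l-1)y_{0d}^*(l)e^{j2\pi m/M}\}}{\sigma_{0d}^2}+\sum_{r=1}^K\ln I\Big(\sigma_{0r}^2\gamma_{rd},\ (1+2\gamma_{0r})\sigma_{0r}^2\gamma_{rd},\ \frac{|y_{rd}(l)-y_{rd}(l-1)e^{j2\pi m/M}|^2}{2\sigma_{rd}^2},\ \frac{|y_{rd}(l)+y_{rd}(l-1)e^{j2\pi m/M}|^2}{2\sigma_{rd}^2},\ 1\Big)\Bigg\}.$$
   Context: $\mathcal{CN}(\boldsymbol{\mu},\boldsymbol{\Sigma})$ denotes a circularly symmetric complex Gaussian distribution; $\Re$ is real part, $^*$ complex conjugate. For $\epsilon_1,\epsilon_2>0$, $\beta_1,\beta_2\ge 0$, $\lambda>0$, $$I(\epsilon_1,\epsilon_2,\beta_1,\beta_2,\lambda)=\int_0^\infty \frac{\exp\!\Big[-\Big(x+\frac{\beta_1}{1+\epsilon_1x}+\frac{\beta_2}{1+\epsilon_2x}\Big)\Big]}{(1+\epsilon_1x)^{\lambda}(1+\epsilon_2x)}\,dx.$$ (This model covers both the power-splitting and time-switching noncoherent amplify-and-forward energy-harvesting relay protocols via appropriate choices of the constants $\gamma,\sigma$.) *)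

theory Defs
  imports "HOL-Probability.Probability"
begin

definition cn_std :: "complex measure" where
  "cn_std = density lborel (\<lambda>z. ennreal (exp (- ((cmod z)^2)) / pi))"

text \<open>Random quantities attached to one link index i, all independent:
  (h1, h2, n1, n2) with h1, h2 ~ CN(0,1) and n1, n2 ~ CN(0, I_2).
  Index 0 (direct link): h_0d = h1, n_0d = n1 (h2, n2 unused).
  Index r >= 1 (relay r): h_0r = h1, h_rd = h2, n_0r = n1, n_rd = n2.\<close>
definition link_noise :: "(complex \<times> complex \<times> (complex \<times> complex) \<times> (complex \<times> complex)) measure" where
  "link_noise = cn_std \<Otimes>\<^sub>M (cn_std \<Otimes>\<^sub>M ((cn_std \<Otimes>\<^sub>M cn_std) \<Otimes>\<^sub>M (cn_std \<Otimes>\<^sub>M cn_std)))"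

text \<open>Complex scalar times a vector of C^2 (pair (first = time l-1, second = time l)).\<close>
definition csc :: "complex \<Rightarrow> complex \<times> complex \<Rightarrow> complex \<times> complex" where
  "csc c v = (c * fst v, c * snd v)"

definition symb :: "nat \<Rightarrow> complex \<Rightarrow> nat \<Rightarrow> complex \<times> complex" where
  "symb M s0 m = (s0, s0 * cis (2 * pi * real m / real M))"

text \<open>Observations at the destination: index 0 is y_0d, index r in {1..K} is y_rd.\<close>
definition obs ::
  "nat \<Rightarrow> nat \<Rightarrow> complex \<Rightarrow> real \<Rightarrow> real \<Rightarrow> (nat \<Rightarrow> real) \<Rightarrow> (nat \<Rightarrow> real)
   \<Rightarrow> (nat \<Rightarrow> real) \<Rightarrow> (nat \<Rightarrow> real) \<Rightarrow> nat
   \<Rightarrow> (nat \<Rightarrow> complex \<times> complex \<times> (complex \<times> complex) \<times> (complex \<times> complex))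
   \<Rightarrow> (nat \<Rightarrow> complex \<times> complex)" where
  "obs M K s0 g0d s0d g0r s0r grd srd m \<omega> =
     (\<lambda>i\<in>{0..K}. case \<omega> i of (h1, h2, n1, n2) \<Rightarrow>
        if i = 0 then
          csc (complex_of_real s0d) (csc (complex_of_real (sqrt g0d) * h1) (symb M s0 m) + n1)
        else
          csc (complex_of_real (s0r i * srd i * sqrt (g0r i * grd i)) * h1 * h2) (symb M s0 m)
          + csc (complex_of_real (s0r i * srd i * sqrt (grd i)) * h2) n1
          + csc (complex_of_real (srd i)) n2)"

definition Ifun :: "real \<Rightarrow> real \<Rightarrow> real \<Rightarrow> real \<Rightarrow> real \<Rightarrow> real" where
  "Ifun e1 e2 b1 b2 lam =
     (LBINT x:{0..}. exp (- (x + b1 / (1 + e1 * x) + b2 / (1 + e2 * x)))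
                     / ((1 + e1 * x) powr lam * (1 + e2 * x)))"

definition metric ::
  "nat \<Rightarrow> nat \<Rightarrow> real \<Rightarrow> real \<Rightarrow> (nat \<Rightarrow> real) \<Rightarrow> (nat \<Rightarrow> real)
   \<Rightarrow> (nat \<Rightarrow> real) \<Rightarrow> (nat \<Rightarrow> real) \<Rightarrow> nat \<Rightarrow> (nat \<Rightarrow> complex \<times> complex) \<Rightarrow> real" where
  "metric M K g0d s0d g0r s0r grd srd m y =
     (let e = cis (2 * pi * real m / real M) in
      2 * g0d / (1 + 2 * g0d) * Re (fst (y 0) * cnj (snd (y 0)) * e) / s0d^2
      + (\<Sum>r = 1..K. ln (Ifun ((s0r r)^2 * grd r) ((1 + 2 * g0r r) * (s0r r)^2 * grd r)
                        ((cmod (snd (y r) - fst (y r) * e))^2 / (2 * (srd r)^2))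
                        ((cmod (snd (y r) + fst (y r) * e))^2 / (2 * (srd r)^2))
                        1)))"

end

theory Submission
  imports Defs
begin


lemma sets_borel_atMost: "sets (borel::real measure) = sigma_sets UNIV (range atMost)"
  by (subst borel_eq_atMost) (rule sets_measure_of, simp)

lemma distr_cmod_sq:
  "distr (lborel::complex measure) borel (\<lambda>z. (cmod z)^2) = density lborel (\<lambda>x. ennreal pi * indicator {0..} x)"
proof (rule measure_eqI_generator_eq_countable[where E="range (\<lambda>a. {..a::real})" and \<Omega>=UNIV
        and A="range (\<lambda>n::nat. {..real n})"])
  show "Int_stable (range (\<lambda>a. {..a::real}))"
    by (auto simp: Int_stable_def)
  show "range atMost \<subseteq> Pow (UNIV::real set)" by auto
  show "sets (distr lborel borel (\<lambda>z::complex. (cmod z)\<^sup>2)) = sigma_sets UNIV (range atMost)"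
    unfolding sets_distr by (rule sets_borel_atMost)
  show "sets (density lborel (\<lambda>x::real. ennreal pi * indicator {0..} x)) = sigma_sets UNIV (range atMost)"
    unfolding sets_density sets_lborel by (rule sets_borel_atMost)
  have key: "emeasure (distr (lborel::complex measure) borel (\<lambda>z. (cmod z)^2)) {..a} = ennreal (pi * max a 0)" for a::real
  proof -
    have "emeasure (distr (lborel::complex measure) borel (\<lambda>z. (cmod z)^2)) {..a}
        = emeasure lborel ((\<lambda>z::complex. (cmod z)^2) -` {..a})"
      by (subst emeasure_distr) auto
    also have "\<dots> = ennreal (pi * max a 0)"
    proof (cases "a \<ge> 0")
      case True
      have "(\<lambda>z::complex. (cmod z)^2) -` {..a} = cball 0 (sqrt a)"
        using True by (auto intro: real_le_rsqrt) (metis norm_ge_zero power_mono real_sqrt_pow2)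
      then show ?thesis using True
        by (simp add: emeasure_cball unit_ball_vol_2)
    next
      case False
      then have "(\<lambda>z::complex. (cmod z)^2) -` {..a} = {}"
        by (auto) (smt (verit) zero_le_power2)
      then show ?thesis using False by simp
    qed
    finally show ?thesis .
  qed
  have key2: "emeasure (density lborel (\<lambda>x. ennreal pi * indicator {0..} x)) {..a} = ennreal (pi * max a 0)" for a::real
  proof -
    have "emeasure (density lborel (\<lambda>x. ennreal pi * indicator {0..} x)) {..a}
       = (\<integral>\<^sup>+x. ennreal pi * indicator {0..a} x \<partial>lborel)"
      by (subst emeasure_density) (auto intro!: nn_integral_cong split: split_indicator simp: mult_ac)
    also have "\<dots> = ennreal pi * emeasure lborel {0..a}"
      by (simp add: nn_integral_cmult_indicator)
    also have "\<dots> = ennreal (pi * max a 0)"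
      by (cases "a \<ge> 0") (auto simp: ennreal_mult)
    finally show ?thesis .
  qed
  show "\<And>X. X \<in> range atMost \<Longrightarrow> emeasure (distr lborel borel (\<lambda>z::complex. (cmod z)\<^sup>2)) X =
          emeasure (density lborel (\<lambda>x::real. ennreal pi * indicator {0..} x)) X"
    using key key2 by auto
  show "range (\<lambda>n::nat. {..real n}) \<subseteq> range atMost" by auto
  show "\<Union> (range (\<lambda>n::nat. {..real n})) = UNIV"
    by (auto intro: real_arch_simple)
  show "countable (range (\<lambda>n::nat. {..real n}))" by auto
  show "\<And>a. a \<in> range (\<lambda>n::nat. {..real n}) \<Longrightarrow> emeasure (distr lborel borel (\<lambda>z::complex. (cmod z)\<^sup>2)) a \<noteq> \<infinity>"
    using key by auto
qed

lemma radial: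
  fixes \<phi> :: "real \<Rightarrow> ennreal"
  assumes [measurable]: "\<phi> \<in> borel_measurable borel"
  shows "(\<integral>\<^sup>+z. \<phi> ((cmod z)^2) \<partial>(lborel::complex measure)) = (\<integral>\<^sup>+x. ennreal pi * indicator {0..} x * \<phi> x \<partial>lborel)"
proof -
  have "(\<integral>\<^sup>+z. \<phi> ((cmod z)^2) \<partial>(lborel::complex measure)) = (\<integral>\<^sup>+x. \<phi> x \<partial>distr (lborel::complex measure) borel (\<lambda>z. (cmod z)^2))"
    by (subst nn_integral_distr) auto
  also have "\<dots> = (\<integral>\<^sup>+x. ennreal pi * indicator {0..} x * \<phi> x \<partial>lborel)"
    unfolding distr_cmod_sq by (subst nn_integral_density) auto
  finally show ?thesis .
qed



lemma nn_integral_exp_neg: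
  assumes "p > 0"
  shows "(\<integral>\<^sup>+x. indicator {0..} x * ennreal (exp (- (p * x))) \<partial>lborel) = ennreal (1/p)"
proof -
  interpret prob_space "density lborel (exponential_density p)"
    using prob_space_exponential_density[OF assms] .
  have "(\<integral>\<^sup>+x. ennreal (exponential_density p x) \<partial>lborel) = 1"
    using emeasure_space_1 by (simp add: emeasure_density)
  also have "(\<integral>\<^sup>+x. ennreal (exponential_density p x) \<partial>lborel)
      = (\<integral>\<^sup>+x. ennreal p * (indicator {0..} x * ennreal (exp (- (p * x)))) \<partial>lborel)"
    using assms by (intro nn_integral_cong) (auto simp: exponential_density_def ennreal_mult mult_ac split: split_indicator)
  also have "\<dots> = ennreal p * (\<integral>\<^sup>+x. indicator {0..} x * ennreal (exp (- (p * x))) \<partial>lborel)"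
    by (rule nn_integral_cmult) auto
  finally have "ennreal p * (\<integral>\<^sup>+x. indicator {0..} x * ennreal (exp (- (p * x))) \<partial>lborel) = 1" .
  then have h: "ennreal p * (\<integral>\<^sup>+x. indicator {0..} x * ennreal (exp (- (p * x))) \<partial>lborel) = 1" .
  have "(\<integral>\<^sup>+x. indicator {0..} x * ennreal (exp (- (p * x))) \<partial>lborel)
      = ennreal (1/p) * (ennreal p * (\<integral>\<^sup>+x. indicator {0..} x * ennreal (exp (- (p * x))) \<partial>lborel))"
    using assms by (simp add: mult.assoc[symmetric] ennreal_mult[symmetric])
  then show ?thesis using h by simp
qed

lemma gauss0:
  assumes "p > 0"
  shows "(\<integral>\<^sup>+z. ennreal (exp (- (p * (cmod z)^2))) \<partial>(lborel::complex measure)) = ennreal (pi/p)"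
proof -
  have "(\<integral>\<^sup>+z. ennreal (exp (- (p * (cmod z)^2))) \<partial>(lborel::complex measure))
      = (\<integral>\<^sup>+x. ennreal pi * indicator {0..} x * ennreal (exp (- (p * x))) \<partial>lborel)"
    by (rule radial[where \<phi>="\<lambda>x. ennreal (exp (- (p * x)))"]) auto
  also have "\<dots> = ennreal pi * (\<integral>\<^sup>+x. indicator {0..} x * ennreal (exp (- (p * x))) \<partial>lborel)"
    by (subst nn_integral_cmult[symmetric]) (auto simp: mult_ac)
  also have "\<dots> = ennreal (pi/p)"
    using assms by (simp add: nn_integral_exp_neg ennreal_mult[symmetric])
  finally show ?thesis .
qed

lemma nn_integral_translate:
  fixes g :: "'a::euclidean_space \<Rightarrow> ennreal"
  assumes [measurable]: "g \<in> borel_measurable borel"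
  shows "(\<integral>\<^sup>+z. g z \<partial>lborel) = (\<integral>\<^sup>+z. g (c + z) \<partial>lborel)"
proof -
  have "(\<integral>\<^sup>+z. g z \<partial>lborel) = (\<integral>\<^sup>+z. g z \<partial>distr lborel borel ((+) c))"
    by (simp add: lborel_distr_plus)
  also have "\<dots> = (\<integral>\<^sup>+z. g (c + z) \<partial>lborel)"
    by (subst nn_integral_distr) auto
  finally show ?thesis .
qed

lemma gauss_ident:
  assumes "p > 0"
  shows "- p * (cmod z)^2 + 2 * Re (cnj z * w) = (cmod w)^2 / p + (- p * (cmod (z - w / complex_of_real p))^2)"
  unfolding cmod_power2 using assms by (simp add: field_simps power2_eq_square)

lemma cgauss:
  assumes "p > 0"
  shows "(\<integral>\<^sup>+z. ennreal (exp (- p * (cmod z)^2 + 2 * Re (cnj z * w))) \<partial>(lborel::complex measure))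
       = ennreal (pi / p * exp ((cmod w)^2 / p))"
proof -
  let ?c = "w / complex_of_real p"
  have "(\<integral>\<^sup>+z. ennreal (exp (- p * (cmod z)^2 + 2 * Re (cnj z * w))) \<partial>(lborel::complex measure))
    = (\<integral>\<^sup>+z. ennreal (exp ((cmod w)^2 / p)) * ennreal (exp (- p * (cmod (z - ?c))^2)) \<partial>lborel)"
    using assms by (intro nn_integral_cong) (subst gauss_ident[OF assms], simp add: ennreal_mult[symmetric] exp_add[symmetric])
  also have "\<dots> = (\<integral>\<^sup>+z. ennreal (exp ((cmod w)^2 / p)) * ennreal (exp (- p * (cmod (?c + z - ?c))^2)) \<partial>lborel)"
    by (rule nn_integral_translate) auto
  also have "\<dots> = ennreal (exp ((cmod w)^2 / p)) * (\<integral>\<^sup>+z. ennreal (exp (- p * (cmod z)^2)) \<partial>lborel)"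
    by (subst nn_integral_cmult) auto
  also have "\<dots> = ennreal (pi / p * exp ((cmod w)^2 / p))"
    using assms by (simp add: gauss0 ennreal_mult[symmetric] mult_ac)
  finally show ?thesis .
qed



lemma borel_measurable_cnj[measurable]: "cnj \<in> borel_measurable borel"
  by (intro borel_measurable_continuous_onI continuous_intros)

lemma cmod_diff_sq:
  "(cmod (w - a*z))^2 = (cmod w)^2 - 2*Re(cnj z * (cnj a * w)) + (cmod a)^2 * (cmod z)^2"
  unfolding cmod_power2 by (simp add: power2_eq_square algebra_simps)

lemma gB:
  assumes "\<alpha> > 0" "\<beta> \<ge> 0"
  shows "(\<integral>\<^sup>+z. ennreal (exp (- \<alpha> * (cmod z)^2 - \<beta> * (cmod (w - a*z))^2)) \<partial>(lborel::complex measure))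
     = ennreal (pi / (\<alpha> + \<beta> * (cmod a)^2) * exp (- \<alpha> * \<beta> * (cmod w)^2 / (\<alpha> + \<beta> * (cmod a)^2)))"
proof -
  define p where "p = \<alpha> + \<beta> * (cmod a)^2"
  define W where "W = complex_of_real \<beta> * (cnj a * w)"
  have p: "p > 0" using assms unfolding p_def by (smt (verit) mult_nonneg_nonneg zero_le_power2)
  have eq: "- \<alpha> * (cmod z)^2 - \<beta> * (cmod (w - a*z))^2 = (- p * (cmod z)^2 + 2 * Re (cnj z * W)) + (- \<beta> * (cmod w)^2)" for z
    unfolding cmod_diff_sq p_def W_def by (simp add: algebra_simps)
  have "(\<integral>\<^sup>+z. ennreal (exp (- \<alpha> * (cmod z)^2 - \<beta> * (cmod (w - a*z))^2)) \<partial>(lborel::complex measure))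
     = (\<integral>\<^sup>+z. ennreal (exp (- p * (cmod z)^2 + 2 * Re (cnj z * W))) * ennreal (exp (- \<beta> * (cmod w)^2)) \<partial>lborel)"
    by (intro nn_integral_cong) (subst eq, simp add: ennreal_mult[symmetric] exp_add[symmetric])
  also have "\<dots> = (\<integral>\<^sup>+z. ennreal (exp (- p * (cmod z)^2 + 2 * Re (cnj z * W))) \<partial>lborel) * ennreal (exp (- \<beta> * (cmod w)^2))"
    by (rule nn_integral_multc) measurable
  also have "\<dots> = ennreal (pi / p * exp ((cmod W)^2 / p)) * ennreal (exp (- \<beta> * (cmod w)^2))"
    by (simp only: cgauss[OF p])
  also have "\<dots> = ennreal (pi / p * exp ((cmod W)^2 / p - \<beta> * (cmod w)^2))"
    using p by (simp add: ennreal_mult[symmetric] exp_add[symmetric] mult.assoc)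
  also have "(cmod W)^2 / p - \<beta> * (cmod w)^2 = - \<alpha> * \<beta> * (cmod w)^2 / p"
    using p unfolding W_def p_def
    by (simp add: norm_mult power_mult_distrib field_simps power2_eq_square)
  finally show ?thesis unfolding p_def .
qed

definition qv :: "real \<Rightarrow> complex \<Rightarrow> real" where
  "qv s u = exp (- ((cmod u)^2) / s) / (pi * s)"

lemma qv_nonneg: "V > 0 \<Longrightarrow> qv V w \<ge> 0"
  by (simp add: qv_def)

lemma sets_cn_std[measurable_cong, simp]: "sets cn_std = sets borel"
  by (simp add: cn_std_def)

lemma space_cn_std[simp]: "space cn_std = UNIV"
  by (simp add: cn_std_def)

lemma nn_integral_cn:
  assumes [measurable]: "f \<in> borel_measurable borel"
  shows "(\<integral>\<^sup>+z. f z \<partial>cn_std) = (\<integral>\<^sup>+z. ennreal (exp (- ((cmod z)^2)) / pi) * f z \<partial>lborel)"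
  unfolding cn_std_def by (subst nn_integral_density) auto

lemma prob_space_cn: "prob_space cn_std"
proof
  have "emeasure cn_std (space cn_std) = (\<integral>\<^sup>+z. ennreal (exp (- ((cmod z)^2)) / pi) \<partial>lborel)"
    unfolding cn_std_def by (simp add: emeasure_density)
  also have "\<dots> = (\<integral>\<^sup>+z. ennreal (1/pi) * ennreal (exp (- 1 * (cmod z)^2)) \<partial>lborel)"
    by (intro nn_integral_cong) (simp add: ennreal_mult[symmetric])
  also have "\<dots> = 1"
    using gauss0[of 1] by (subst nn_integral_cmult) (auto simp: ennreal_mult[symmetric])
  finally show "emeasure cn_std (space cn_std) = 1" .
qed

lemma qmix:
  assumes "V > 0"
  shows "(\<integral>\<^sup>+n. ennreal (qv V (w - a*n)) \<partial>cn_std) = ennreal (qv (V + (cmod a)^2) w)"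
proof -
  have e: "exp (- 1 * x - (1/V) * y) = exp (- x) * exp (- y / V)" for x y
    by (simp add: exp_add[symmetric])
  have "(\<integral>\<^sup>+n. ennreal (qv V (w - a*n)) \<partial>cn_std)
      = (\<integral>\<^sup>+n. ennreal (1 / (pi * (pi * V))) * ennreal (exp (- 1 * (cmod n)^2 - (1/V) * (cmod (w - a*n))^2)) \<partial>lborel)"
    using assms by (subst nn_integral_cn) (auto intro!: nn_integral_cong simp: qv_def ennreal_mult[symmetric] exp_add[symmetric])
  also have "\<dots> = ennreal (1 / (pi * (pi * V))) * ennreal (pi / (1 + (1/V) * (cmod a)^2) * exp (- 1 * (1/V) * (cmod w)^2 / (1 + (1/V) * (cmod a)^2)))"
    using assms by (subst nn_integral_cmult, measurable, subst gB) auto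
  also have "\<dots> = ennreal (qv (V + (cmod a)^2) w)"
    using assms unfolding qv_def
    by (simp add: ennreal_mult[symmetric] field_simps)
  finally show ?thesis .
qed



lemma borel_measurable_qv[measurable (raw)]:
  assumes [measurable]: "f \<in> borel_measurable M" "g \<in> borel_measurable M"
  shows "(\<lambda>x. qv (f x) (g x)) \<in> borel_measurable M"
  unfolding qv_def by measurable

lemma gC:
  assumes V: "V > 0" and a: "cmod a2 = cmod a1"
  shows "(\<integral>\<^sup>+h. ennreal (qv V (y1 - a1*h) * qv V (y2 - a2*h)) \<partial>cn_std)
     = ennreal (1 / (pi^2 * V * (V + 2*(cmod a1)^2)) *
         exp (- ((cmod y1)^2 + (cmod y2)^2) / V + (cmod (cnj a1 * y1 + cnj a2 * y2))^2 / (V * (V + 2*(cmod a1)^2))))"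
proof -
  define p where "p = 1 + 2 * (cmod a1)^2 / V"
  define W where "W = (cnj a1 * y1 + cnj a2 * y2) / complex_of_real V"
  define S where "S = ((cmod y1)^2 + (cmod y2)^2) / V"
  have p: "p > 0" using V unfolding p_def by (simp add: add_pos_nonneg)
  have ex: "- ((cmod h)^2) - (cmod (y1 - a1*h))^2 / V - (cmod (y2 - a2*h))^2 / V
        = (- p * (cmod h)^2 + 2 * Re (cnj h * W)) + (- S)" for h
  proof -
    define r1 where "r1 = Re (cnj h * (cnj a1 * y1))"
    define r2 where "r2 = Re (cnj h * (cnj a2 * y2))"
    define rw where "rw = Re (cnj h * W)"
    have rw: "rw = (r1 + r2) / V"
      unfolding W_def rw_def r1_def r2_def by (simp add: distrib_left Re_divide_of_real)
    show ?thesis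
      unfolding cmod_diff_sq a p_def S_def r1_def[symmetric] r2_def[symmetric] rw_def[symmetric]
      using V by (simp add: rw field_simps)
  qed
  have pw: "ennreal (exp (- ((cmod h)^2)) / pi) * ennreal (qv V (y1 - a1*h) * qv V (y2 - a2*h))
     = ennreal (1 / (pi^3 * V^2) * exp (- S)) * ennreal (exp (- p * (cmod h)^2 + 2 * Re (cnj h * W)))" for h
  proof -
    have "exp (- ((cmod h)^2)) / pi * (qv V (y1 - a1*h) * qv V (y2 - a2*h))
        = 1 / (pi^3 * V^2) * exp (- ((cmod h)^2) - (cmod (y1 - a1*h))^2 / V - (cmod (y2 - a2*h))^2 / V)"
      unfolding qv_def by (simp add: exp_diff exp_minus exp_add field_simps power2_eq_square power3_eq_cube)
    also have "\<dots> = 1 / (pi^3 * V^2) * exp (- S) * exp (- p * (cmod h)^2 + 2 * Re (cnj h * W))"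
      unfolding ex exp_add by (simp add: mult_ac)
    finally show ?thesis using V
      by (simp add: ennreal_mult[symmetric] qv_nonneg)
  qed
  have "(\<integral>\<^sup>+h. ennreal (qv V (y1 - a1*h) * qv V (y2 - a2*h)) \<partial>cn_std)
      = (\<integral>\<^sup>+h. ennreal (1 / (pi^3 * V^2) * exp (- S)) * ennreal (exp (- p * (cmod h)^2 + 2 * Re (cnj h * W))) \<partial>lborel)"
    by (subst nn_integral_cn) (auto simp: pw)
  also have "\<dots> = ennreal (1 / (pi^3 * V^2) * exp (- S)) * (\<integral>\<^sup>+h. ennreal (exp (- p * (cmod h)^2 + 2 * Re (cnj h * W))) \<partial>lborel)"
    by (rule nn_integral_cmult) measurable
  also have "\<dots> = ennreal (1 / (pi^3 * V^2) * exp (- S)) * ennreal (pi / p * exp ((cmod W)^2 / p))"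
    by (simp only: cgauss[OF p])
  also have "\<dots> = ennreal (1 / (pi^3 * V^2) * exp (- S) * (pi / p * exp ((cmod W)^2 / p)))"
    using p by (simp add: ennreal_mult[symmetric])
  also have "1 / (pi^3 * V^2) * exp (- S) * (pi / p * exp ((cmod W)^2 / p))
     = 1 / (pi^2 * V * (V + 2*(cmod a1)^2)) *
         exp (- ((cmod y1)^2 + (cmod y2)^2) / V + (cmod (cnj a1 * y1 + cnj a2 * y2))^2 / (V * (V + 2*(cmod a1)^2)))"
  proof -
    have cW: "(cmod W)^2 = (cmod (cnj a1 * y1 + cnj a2 * y2))^2 / V^2"
      unfolding W_def using V by (simp add: norm_divide power_divide)
    have pV: "p * V = V + 2*(cmod a1)^2" unfolding p_def using V by (simp add: field_simps)
    have e1: "1 / (pi^3 * V^2) * (pi / p) = 1 / (pi^2 * V * (V + 2*(cmod a1)^2))"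
      using V p pV[symmetric] by (simp add: field_simps power2_eq_square power3_eq_cube)
    have e2: "(cmod W)^2 / p = (cmod (cnj a1 * y1 + cnj a2 * y2))^2 / (V * (V + 2*(cmod a1)^2))"
      unfolding cW pV[symmetric] using V p by (simp add: field_simps power2_eq_square)
    have "1 / (pi^3 * V^2) * exp (- S) * (pi / p * exp ((cmod W)^2 / p))
        = (1 / (pi^3 * V^2) * (pi / p)) * exp (- S + (cmod W)^2 / p)"
      unfolding exp_add by (simp add: mult_ac)
    then show ?thesis unfolding e1 e2 S_def by (simp add: minus_divide_left)
  qed
  finally show ?thesis .
qed



definition cnd :: "complex \<Rightarrow> real" where "cnd z = exp (- ((cmod z)^2)) / pi"

lemma cn_std_cnd: "cn_std = density lborel (\<lambda>z. ennreal (cnd z))"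
  by (simp add: cn_std_def cnd_def)

lemma borel_measurable_cnd[measurable]: "cnd \<in> borel_measurable borel"
  unfolding cnd_def by measurable

lemma borel_measurable_fst_c[measurable]: "(fst :: complex \<times> complex \<Rightarrow> complex) \<in> borel_measurable borel"
  by (intro borel_measurable_continuous_onI continuous_intros)

lemma borel_measurable_snd_c[measurable]: "(snd :: complex \<times> complex \<Rightarrow> complex) \<in> borel_measurable borel"
  by (intro borel_measurable_continuous_onI continuous_intros)

lemma cn2_density:
  "cn_std \<Otimes>\<^sub>M cn_std = density (lborel::(complex \<times> complex) measure) (\<lambda>(a,b). ennreal (cnd a) * ennreal (cnd b))"
proof -
  interpret P: prob_space cn_std by (rule prob_space_cn)
  have "cn_std \<Otimes>\<^sub>M cn_std = density (lborel \<Otimes>\<^sub>M lborel) (\<lambda>(a,b). ennreal (cnd a) * ennreal (cnd b))"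
    unfolding cn_std_cnd
    by (rule pair_measure_density) (auto intro: sigma_finite_lborel P.sigma_finite_measure simp: cn_std_cnd[symmetric])
  then show ?thesis by (simp add: lborel_prod)
qed

lemma cn2_affine:
  fixes \<psi> :: "complex \<times> complex \<Rightarrow> ennreal" and \<mu> :: "complex \<times> complex"
  assumes [measurable]: "\<psi> \<in> borel_measurable borel" and s: "\<sigma> > 0"
  shows "(\<integral>\<^sup>+n. \<psi> (\<mu> + \<sigma> *\<^sub>R n) \<partial>(cn_std \<Otimes>\<^sub>M cn_std))
     = (\<integral>\<^sup>+y. ennreal (qv (\<sigma>^2) (fst y - fst \<mu>) * qv (\<sigma>^2) (snd y - snd \<mu>)) * \<psi> y \<partial>lborel)"
proof -
  let ?G = "\<lambda>y. ennreal (qv (\<sigma>^2) (fst y - fst \<mu>) * qv (\<sigma>^2) (snd y - snd \<mu>)) * \<psi> y"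
  have "(\<integral>\<^sup>+y. ?G y \<partial>lborel) = (\<integral>\<^sup>+y. ?G y \<partial>density (distr lborel borel (\<lambda>x. \<mu> + \<sigma> *\<^sub>R x)) (\<lambda>_. \<bar>\<sigma>\<bar>^DIM(complex \<times> complex)))"
    using lborel_affine[of \<sigma> \<mu>] s by simp
  also have "\<dots> = (\<integral>\<^sup>+x. ennreal (\<sigma>^4) * ?G (\<mu> + \<sigma> *\<^sub>R x) \<partial>lborel)"
    using s by (subst nn_integral_density, measurable, subst nn_integral_distr) auto
  also have "\<dots> = (\<integral>\<^sup>+x. (case x of (a,b) \<Rightarrow> ennreal (cnd a) * ennreal (cnd b)) * \<psi> (\<mu> + \<sigma> *\<^sub>R x) \<partial>lborel)"
  proof (intro nn_integral_cong)
    fix x :: "complex \<times> complex"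
    obtain a b where x: "x = (a,b)" by (cases x)
    have "\<sigma>^4 * (qv (\<sigma>^2) (complex_of_real \<sigma> * a) * qv (\<sigma>^2) (complex_of_real \<sigma> * b)) = cnd a * cnd b"
      using s unfolding qv_def cnd_def by (simp add: norm_mult power_mult_distrib field_simps power2_eq_square power4_eq_xxxx)
    then show "ennreal (\<sigma>^4) * ?G (\<mu> + \<sigma> *\<^sub>R x) = (case x of (a,b) \<Rightarrow> ennreal (cnd a) * ennreal (cnd b)) * \<psi> (\<mu> + \<sigma> *\<^sub>R x)"
      using s unfolding x by (simp add: scaleR_conv_of_real ennreal_mult[symmetric] qv_nonneg cnd_def mult.assoc[symmetric])
  qed
  also have "\<dots> = (\<integral>\<^sup>+n. \<psi> (\<mu> + \<sigma> *\<^sub>R n) \<partial>(cn_std \<Otimes>\<^sub>M cn_std))"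
    unfolding cn2_density by (subst nn_integral_density) auto
  finally show ?thesis ..
qed



lemma distr_eq_densityI:
  fixes F :: "'a \<Rightarrow> 'b::euclidean_space"
  assumes F[measurable]: "F \<in> measurable P borel" and g[measurable]: "g \<in> borel_measurable borel"
  assumes eq: "\<And>\<psi>. \<psi> \<in> borel_measurable borel \<Longrightarrow> (\<integral>\<^sup>+\<omega>. \<psi> (F \<omega>) \<partial>P) = (\<integral>\<^sup>+y. g y * \<psi> y \<partial>lborel)"
  shows "distr P lborel F = density lborel g"
proof (rule measure_eqI)
  show "sets (distr P lborel F) = sets (density lborel g)" by simp
  fix A assume A: "A \<in> sets (distr P lborel F)"
  then have [measurable]: "A \<in> sets borel" by simp
  have "emeasure (distr P lborel F) A = emeasure P (F -` A \<inter> space P)"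
    by (subst emeasure_distr) auto
  also have "\<dots> = (\<integral>\<^sup>+\<omega>. indicator (F -` A \<inter> space P) \<omega> \<partial>P)"
    by (rule nn_integral_indicator[symmetric]) measurable
  also have "\<dots> = (\<integral>\<^sup>+\<omega>. indicator A (F \<omega>) \<partial>P)"
    by (intro nn_integral_cong) (auto split: split_indicator)
  also have "\<dots> = (\<integral>\<^sup>+y. g y * indicator A y \<partial>lborel)"
    by (rule eq) measurable
  also have "\<dots> = emeasure (density lborel g) A"
    by (subst emeasure_density) auto
  finally show "emeasure (distr P lborel F) A = emeasure (density lborel g) A" .
qed

lemma prob_space_cn2: "prob_space (cn_std \<Otimes>\<^sub>M cn_std)"
  using prob_space_cn by (intro prob_space_pair) (auto simp: pair_prob_space_def pair_sigma_finite_def)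

lemma sets_cn2[measurable_cong]: "sets (cn_std \<Otimes>\<^sub>M cn_std) = sets (borel :: (complex \<times> complex) measure)"
  by (simp add: borel_prod[symmetric] cong: sets_pair_measure_cong)

lemma sets_link_noise[measurable_cong]:
  "sets link_noise = sets (borel \<Otimes>\<^sub>M (borel \<Otimes>\<^sub>M ((borel :: (complex \<times> complex) measure) \<Otimes>\<^sub>M (borel :: (complex \<times> complex) measure))))"
  unfolding link_noise_def by (intro sets_pair_measure_cong sets_cn2) auto

lemma nn_integral_link:
  assumes [measurable]: "\<Phi> \<in> borel_measurable link_noise"
  shows "(\<integral>\<^sup>+\<omega>. \<Phi> \<omega> \<partial>link_noise) =
    (\<integral>\<^sup>+h1. \<integral>\<^sup>+h2. \<integral>\<^sup>+n1. \<integral>\<^sup>+n2. \<Phi> (h1, h2, n1, n2) \<partial>(cn_std \<Otimes>\<^sub>M cn_std) \<partial>(cn_std \<Otimes>\<^sub>M cn_std) \<partial>cn_std \<partial>cn_std)"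
proof -
  interpret C: prob_space cn_std by (rule prob_space_cn)
  interpret C2: prob_space "cn_std \<Otimes>\<^sub>M cn_std" by (rule prob_space_cn2)
  interpret C22: prob_space "(cn_std \<Otimes>\<^sub>M cn_std) \<Otimes>\<^sub>M (cn_std \<Otimes>\<^sub>M cn_std)"
    by (intro prob_space_pair) (auto simp: pair_prob_space_def pair_sigma_finite_def C2.prob_space_axioms prob_space_cn)
  interpret C3: prob_space "cn_std \<Otimes>\<^sub>M ((cn_std \<Otimes>\<^sub>M cn_std) \<Otimes>\<^sub>M (cn_std \<Otimes>\<^sub>M cn_std))"
    by (intro prob_space_pair) (auto simp: pair_prob_space_def pair_sigma_finite_def C22.prob_space_axioms C.prob_space_axioms prob_space_cn)
  have "(\<integral>\<^sup>+\<omega>. \<Phi> \<omega> \<partial>link_noise) = (\<integral>\<^sup>+h1. \<integral>\<^sup>+r. \<Phi> (h1, r) \<partial>(cn_std \<Otimes>\<^sub>M ((cn_std \<Otimes>\<^sub>M cn_std) \<Otimes>\<^sub>M (cn_std \<Otimes>\<^sub>M cn_std))) \<partial>cn_std)"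
    unfolding link_noise_def by (rule C3.nn_integral_fst[symmetric]) (simp add: link_noise_def[symmetric])
  also have "\<dots> = (\<integral>\<^sup>+h1. \<integral>\<^sup>+h2. \<integral>\<^sup>+r. \<Phi> (h1, h2, r) \<partial>((cn_std \<Otimes>\<^sub>M cn_std) \<Otimes>\<^sub>M (cn_std \<Otimes>\<^sub>M cn_std)) \<partial>cn_std \<partial>cn_std)"
  proof (rule nn_integral_cong)
    fix h1 assume [measurable]: "h1 \<in> space cn_std"
    show "(\<integral>\<^sup>+r. \<Phi> (h1, r) \<partial>(cn_std \<Otimes>\<^sub>M ((cn_std \<Otimes>\<^sub>M cn_std) \<Otimes>\<^sub>M (cn_std \<Otimes>\<^sub>M cn_std))))
       = (\<integral>\<^sup>+h2. \<integral>\<^sup>+r. \<Phi> (h1, h2, r) \<partial>((cn_std \<Otimes>\<^sub>M cn_std) \<Otimes>\<^sub>M (cn_std \<Otimes>\<^sub>M cn_std)) \<partial>cn_std)"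
      by (rule C22.nn_integral_fst[symmetric]) measurable
  qed
  also have "\<dots> = (\<integral>\<^sup>+h1. \<integral>\<^sup>+h2. \<integral>\<^sup>+n1. \<integral>\<^sup>+n2. \<Phi> (h1, h2, n1, n2) \<partial>(cn_std \<Otimes>\<^sub>M cn_std) \<partial>(cn_std \<Otimes>\<^sub>M cn_std) \<partial>cn_std \<partial>cn_std)"
  proof (intro nn_integral_cong)
    fix h1 h2 assume [measurable]: "h1 \<in> space cn_std" "h2 \<in> space cn_std"
    show "(\<integral>\<^sup>+r. \<Phi> (h1, h2, r) \<partial>((cn_std \<Otimes>\<^sub>M cn_std) \<Otimes>\<^sub>M (cn_std \<Otimes>\<^sub>M cn_std)))
       = (\<integral>\<^sup>+n1. \<integral>\<^sup>+n2. \<Phi> (h1, h2, n1, n2) \<partial>(cn_std \<Otimes>\<^sub>M cn_std) \<partial>(cn_std \<Otimes>\<^sub>M cn_std))"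
      by (rule C2.nn_integral_fst[symmetric]) measurable
  qed
  finally show ?thesis .
qed



lemma cmod_add_sq: "(cmod (u + v))^2 = (cmod u)^2 + (cmod v)^2 + 2 * Re (u * cnj v)"
  unfolding cmod_power2 by (simp add: power2_eq_square algebra_simps)

lemma cmod_diff_sq2: "(cmod (u - v))^2 = (cmod u)^2 + (cmod v)^2 - 2 * Re (u * cnj v)"
  unfolding cmod_power2 by (simp add: power2_eq_square algebra_simps)

lemma sqY:
  assumes "cmod e = 1"
  shows "(cmod (y2 + e*y1))^2 = (cmod y1)^2 + (cmod y2)^2 + 2 * Re (y1 * cnj y2 * e)"
proof -
  have "True" by simp
  then show ?thesis unfolding cmod_add_sq using assms by (simp add: norm_mult algebra_simps)
qed

lemma normU:
  assumes "cmod s0 = 1" "cmod e = 1"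
  shows "(cmod (cnj (b * s0) * y1 + cnj (b * s0*e) * y2))^2 = (cmod b)^2 * (cmod (y2 + e*y1))^2"
proof -
  have ee: "cnj e * e = 1"
    using complex_norm_square[of e] assms by (simp add: mult.commute)
  have "cnj (b * s0) * cnj e * (y2 + e*y1) = cnj (b * s0) * cnj e * y2 + cnj (b * s0) * (cnj e * e) * y1"
    by (simp add: algebra_simps)
  then have "cnj (b * s0) * y1 + cnj (b * s0*e) * y2 = cnj (b * s0) * cnj e * (y2 + e*y1)"
    by (simp add: ee)
  then show ?thesis using assms by (simp add: norm_mult power_mult_distrib)
qed

definition D0 :: "real \<Rightarrow> real \<Rightarrow> complex \<Rightarrow> complex \<times> complex \<Rightarrow> real" where
  "D0 g s e y = 1 / (pi^2 * s^4 * (1 + 2*g)) *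
     exp (- ((cmod (fst y))^2 + (cmod (snd y))^2) / s^2
          + g * ((cmod (fst y))^2 + (cmod (snd y))^2 + 2 * Re (fst y * cnj (snd y) * e)) / (s^2 * (1 + 2*g)))"

lemma borel_measurable_D0[measurable]: "D0 g s e \<in> borel_measurable borel"
  unfolding D0_def by measurable

lemma direct_link:
  fixes g s :: real and s0 e :: complex
  assumes g: "g > 0" and s: "s > 0" and s0: "cmod s0 = 1" and e: "cmod e = 1"
  shows "distr link_noise lborel (\<lambda>(h1,h2,n1,n2). csc (complex_of_real s) (csc (complex_of_real (sqrt g) * h1) (s0, s0*e) + n1))
       = density lborel (\<lambda>y. ennreal (D0 g s e y))"
proof -
  interpret C: prob_space cn_std by (rule prob_space_cn)
  interpret C2: prob_space "cn_std \<Otimes>\<^sub>M cn_std" by (rule prob_space_cn2)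
  interpret LC: pair_sigma_finite lborel cn_std
    by (simp add: pair_sigma_finite_def C.sigma_finite_measure_axioms lborel.sigma_finite_measure_axioms)
  define a1 where "a1 = complex_of_real (s * sqrt g) * s0"
  define a2 where "a2 = a1 * e"
  define mu where "mu h = (a1 * h, a2 * h)" for h
  have Fe: "csc (complex_of_real s) (csc (complex_of_real (sqrt g) * h1) (s0, s0*e) + n1) = mu h1 + s *\<^sub>R n1" for h1 n1
    by (cases n1) (simp add: csc_def mu_def a1_def a2_def scaleR_conv_of_real algebra_simps)
  show ?thesis
  proof (rule distr_eq_densityI)
    show "(\<lambda>(h1,h2,n1,n2). csc (complex_of_real s) (csc (complex_of_real (sqrt g) * h1) (s0, s0*e) + n1)) \<in> measurable link_noise borel"
    proof -
      have "(\<lambda>(h1,h2,n1,n2). csc (complex_of_real s) (csc (complex_of_real (sqrt g) * h1) (s0, s0*e) + n1))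
          = (\<lambda>\<omega>. (a1 * fst \<omega> + complex_of_real s * fst (fst (snd (snd \<omega>))), a2 * fst \<omega> + complex_of_real s * snd (fst (snd (snd \<omega>)))))"
        by (auto simp: fun_eq_iff Fe mu_def scaleR_conv_of_real)
      also have "\<dots> \<in> measurable link_noise borel" by measurable
      finally show ?thesis .
    qed
    show "(\<lambda>y. ennreal (D0 g s e y)) \<in> borel_measurable borel" by measurable
    fix \<psi> :: "complex \<times> complex \<Rightarrow> ennreal" assume [measurable]: "\<psi> \<in> borel_measurable borel"
    let ?Q = "\<lambda>y h. ennreal (qv (s^2) (fst y - a1 * h) * qv (s^2) (snd y - a2 * h))"
    have "(\<integral>\<^sup>+\<omega>. \<psi> ((\<lambda>(h1,h2,n1,n2). csc (complex_of_real s) (csc (complex_of_real (sqrt g) * h1) (s0, s0*e) + n1)) \<omega>) \<partial>link_noise)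
        = (\<integral>\<^sup>+h1. \<integral>\<^sup>+h2. \<integral>\<^sup>+n1. \<integral>\<^sup>+n2. \<psi> (mu h1 + s *\<^sub>R n1) \<partial>(cn_std \<Otimes>\<^sub>M cn_std) \<partial>(cn_std \<Otimes>\<^sub>M cn_std) \<partial>cn_std \<partial>cn_std)"
      by (subst nn_integral_link) (simp_all add: Fe mu_def scaleR_conv_of_real, measurable)
    also have "\<dots> = (\<integral>\<^sup>+h1. \<integral>\<^sup>+n1. \<psi> (mu h1 + s *\<^sub>R n1) \<partial>(cn_std \<Otimes>\<^sub>M cn_std) \<partial>cn_std)"
      using C.emeasure_space_1 C2.emeasure_space_1 by simp
    also have "\<dots> = (\<integral>\<^sup>+h1. \<integral>\<^sup>+y. ?Q y h1 * \<psi> y \<partial>lborel \<partial>cn_std)"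
      by (intro nn_integral_cong) (simp add: cn2_affine s mu_def)
    also have "\<dots> = (\<integral>\<^sup>+y. \<integral>\<^sup>+h1. ?Q y h1 * \<psi> y \<partial>cn_std \<partial>lborel)"
      by (rule LC.Fubini') measurable
    also have "\<dots> = (\<integral>\<^sup>+y. (\<integral>\<^sup>+h1. ?Q y h1 \<partial>cn_std) * \<psi> y \<partial>lborel)"
      by (intro nn_integral_cong nn_integral_multc) measurable
    also have "\<dots> = (\<integral>\<^sup>+y. ennreal (D0 g s e y) * \<psi> y \<partial>lborel)"
    proof (intro nn_integral_cong arg_cong2[where f="(*)"] refl)
      fix y :: "complex \<times> complex"
      have ca: "cmod a2 = cmod a1" using e by (simp add: a2_def norm_mult)
      have ca1: "(cmod a1)^2 = s^2 * g" using s0 g s by (simp add: a1_def norm_mult power_mult_distrib)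
      have U: "(cmod (cnj a1 * fst y + cnj a2 * snd y))^2 = s^2 * g * ((cmod (fst y))^2 + (cmod (snd y))^2 + 2 * Re (fst y * cnj (snd y) * e))"
      proof -
        have cb: "(cmod (complex_of_real (s * sqrt g)))^2 = s^2 * g"
          using s g by (simp del: of_real_mult add: norm_mult power_mult_distrib)
        have "(cmod (cnj a1 * fst y + cnj a2 * snd y))^2 = (cmod (complex_of_real (s * sqrt g)))^2 * (cmod (snd y + e * fst y))^2"
          unfolding a2_def a1_def by (rule normU[OF s0 e])
        then show ?thesis unfolding cb sqY[OF e] .
      qed
      show "(\<integral>\<^sup>+h1. ?Q y h1 \<partial>cn_std) = ennreal (D0 g s e y)"
      proof -
        have d: "s^2 + 2 * (s^2 * g) = s^2 * (1 + 2*g)" by (simp add: algebra_simps)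
        have g1: "1 + 2*g \<noteq> 0" using g by simp
        have ex: "s^2 * g * X / (s^2 * (s^2 + 2 * (s^2 * g))) = g * X / (s^2 * (1 + 2*g))" for X
        proof -
          have "s^2 * g * X / (s^2 * (s^2 + 2 * (s^2 * g))) = (s^2 * (g * X)) / (s^2 * (s^2 * (1 + 2*g)))"
            unfolding d by (simp add: mult.assoc)
          also have "\<dots> = g * X / (s^2 * (1 + 2*g))"
            using s by (intro mult_divide_mult_cancel_left) simp
          finally show ?thesis .
        qed
        have pf: "1 / (pi^2 * s^2 * (s^2 + 2 * (s^2 * g))) = 1 / (pi^2 * s^4 * (1 + 2*g))"
          unfolding d by (simp add: algebra_simps power2_eq_square power4_eq_xxxx)
        show ?thesis
        proof -
          have V: "s^2 > 0" using s by simp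
          show ?thesis unfolding gC[OF V ca] unfolding U ca1 pf ex D0_def by simp
        qed
      qed
    qed
    finally show "(\<integral>\<^sup>+\<omega>. \<psi> ((\<lambda>(h1,h2,n1,n2). csc (complex_of_real s) (csc (complex_of_real (sqrt g) * h1) (s0, s0*e) + n1)) \<omega>) \<partial>link_noise)
        = (\<integral>\<^sup>+y. ennreal (D0 g s e y) * \<psi> y \<partial>lborel)" .
  qed
qed



definition Ifn :: "real \<Rightarrow> real \<Rightarrow> real \<Rightarrow> real \<Rightarrow> real \<Rightarrow> real" where
  "Ifn e1 e2 b1 b2 x = exp (- (x + b1 / (1 + e1 * x) + b2 / (1 + e2 * x))) / ((1 + e1 * x) powr 1 * (1 + e2 * x))"

lemma borel_measurable_Ifn[measurable]: "Ifn e1 e2 b1 b2 \<in> borel_measurable borel"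
  unfolding Ifn_def by measurable

lemma Ifn_bounds:
  assumes "e1 \<ge> 0" "e2 \<ge> 0" "b1 \<ge> 0" "b2 \<ge> 0" "x \<ge> 0"
  shows "Ifn e1 e2 b1 b2 x > 0" "Ifn e1 e2 b1 b2 x \<le> exp (- x)"
proof -
  have p1: "1 + e1 * x \<ge> 1" "1 + e2 * x \<ge> 1" using assms by auto
  then show "Ifn e1 e2 b1 b2 x > 0" unfolding Ifn_def by simp
  have "b1 / (1 + e1 * x) \<ge> 0" "b2 / (1 + e2 * x) \<ge> 0" using assms p1 by auto
  then have "exp (- (x + b1 / (1 + e1 * x) + b2 / (1 + e2 * x))) \<le> exp (- x)" by simp
  moreover have "(1 + e1 * x) powr 1 * (1 + e2 * x) \<ge> 1"
    using p1 mult_mono[of 1 "1+e1*x" 1 "1+e2*x"] by simp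
  ultimately show "Ifn e1 e2 b1 b2 x \<le> exp (- x)"
    unfolding Ifn_def by (smt (verit, best) divide_le_eq exp_gt_zero mult_le_cancel_left1)
qed

lemma Ifun_Ifn: "Ifun e1 e2 b1 b2 1 = (LBINT x:{0..}. Ifn e1 e2 b1 b2 x)"
  unfolding Ifun_def Ifn_def ..

lemma nn_Ifn:
  assumes "e1 \<ge> 0" "e2 \<ge> 0" "b1 \<ge> 0" "b2 \<ge> 0"
  shows "(\<integral>\<^sup>+x. ennreal (indicator {0..} x * Ifn e1 e2 b1 b2 x) \<partial>lborel) = ennreal (Ifun e1 e2 b1 b2 1)"
    and "Ifun e1 e2 b1 b2 1 > 0"
proof -
  let ?f = "\<lambda>x. indicator {0..} x * Ifn e1 e2 b1 b2 x"
  have nn: "?f x \<ge> 0" for x using Ifn_bounds[OF assms, of x] by (auto simp: indicator_def)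
  have "(\<integral>\<^sup>+x. ennreal (?f x) \<partial>lborel) \<le> (\<integral>\<^sup>+x. indicator {0..} x * ennreal (exp (- (1 * x))) \<partial>lborel)"
    using Ifn_bounds[OF assms] by (intro nn_integral_mono) (auto simp: indicator_def)
  also have "\<dots> = ennreal (1/1)" by (rule nn_integral_exp_neg) simp
  finally have le1: "(\<integral>\<^sup>+x. ennreal (?f x) \<partial>lborel) \<le> 1" by simp
  have fin: "(\<integral>\<^sup>+x. ennreal (?f x) \<partial>lborel) < \<infinity>"
    by (rule order.strict_trans1[OF le1]) simp
  have int: "integrable lborel ?f"
    by (rule integrableI_nonneg) (use nn fin in auto)
  have "(\<integral>\<^sup>+x. ennreal (?f x) \<partial>lborel) = ennreal (integral\<^sup>L lborel ?f)"
    using nn by (intro nn_integral_eq_integral int) auto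
  also have "integral\<^sup>L lborel ?f = Ifun e1 e2 b1 b2 1"
    unfolding Ifun_Ifn set_lebesgue_integral_def by simp
  finally show eq: "(\<integral>\<^sup>+x. ennreal (?f x) \<partial>lborel) = ennreal (Ifun e1 e2 b1 b2 1)" .
  define c where "c = exp (- (1 + b1 + b2)) / ((1 + e1) * (1 + e2))"
  have "(\<integral>\<^sup>+x. ennreal c * indicator {0..1::real} x \<partial>lborel) \<le> (\<integral>\<^sup>+x. ennreal (?f x) \<partial>lborel)"
  proof (intro nn_integral_mono)
    fix x :: real
    show "ennreal c * indicator {0..1} x \<le> ennreal (?f x)"
    proof (cases "x \<in> {0..1}")
      case True
      then have x: "0 \<le> x" "x \<le> 1" by auto
      have "1 + e1 * x \<le> 1 + e1" "1 + e2 * x \<le> 1 + e2" "1 + e1 * x \<ge> 1" "1 + e2 * x \<ge> 1"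
        using x assms by (auto simp: mult_left_le)
      have "b1 / (1 + e1 * x) \<le> b1" "b2 / (1 + e2 * x) \<le> b2"
        using \<open>1 + e1 * x \<ge> 1\<close> \<open>1 + e2 * x \<ge> 1\<close> assms by (auto simp: divide_le_eq algebra_simps intro!: mult_nonneg_nonneg)
      have num: "exp (- (1 + b1 + b2)) \<le> exp (- (x + b1 / (1 + e1 * x) + b2 / (1 + e2 * x)))"
        using x \<open>b1 / (1 + e1 * x) \<le> b1\<close> \<open>b2 / (1 + e2 * x) \<le> b2\<close> by simp
      have den: "(1 + e1 * x) powr 1 * (1 + e2 * x) \<le> (1 + e1) * (1 + e2)"
        using \<open>1 + e1 * x \<le> 1 + e1\<close> \<open>1 + e2 * x \<le> 1 + e2\<close> \<open>1 + e1 * x \<ge> 1\<close> \<open>1 + e2 * x \<ge> 1\<close>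
        by (simp add: mult_mono)
      have "c \<le> Ifn e1 e2 b1 b2 x"
        unfolding c_def Ifn_def
        by (rule frac_le) (use num den \<open>1 + e1 * x \<ge> 1\<close> \<open>1 + e2 * x \<ge> 1\<close> in auto)
      then show ?thesis using True by (simp add: indicator_def ennreal_leI)
    qed (auto simp: indicator_def)
  qed
  moreover have "c > 0" unfolding c_def using assms by (simp add: add_pos_nonneg)
  moreover have "(\<integral>\<^sup>+x. ennreal c * indicator {0..1::real} x \<partial>lborel) = ennreal c"
    by (subst nn_integral_cmult_indicator) auto
  ultimately have "0 < (\<integral>\<^sup>+x. ennreal (?f x) \<partial>lborel)"
    by (metis ennreal_less_zero_iff order_less_le_trans)
  then show "Ifun e1 e2 b1 b2 1 > 0" unfolding eq by simp
qed



lemma n1int: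
  assumes V: "V > 0"
  shows "(\<integral>\<^sup>+n. ennreal (qv V (w1 - a * fst n) * qv V (w2 - a * snd n)) \<partial>(cn_std \<Otimes>\<^sub>M cn_std))
       = ennreal (qv (V + (cmod a)^2) w1 * qv (V + (cmod a)^2) w2)"
proof -
  interpret C: prob_space cn_std by (rule prob_space_cn)
  have "(\<integral>\<^sup>+n. ennreal (qv V (w1 - a * fst n) * qv V (w2 - a * snd n)) \<partial>(cn_std \<Otimes>\<^sub>M cn_std))
      = (\<integral>\<^sup>+u. \<integral>\<^sup>+v. ennreal (qv V (w1 - a * u)) * ennreal (qv V (w2 - a * v)) \<partial>cn_std \<partial>cn_std)"
    using V by (subst C.nn_integral_fst[symmetric]) (auto simp: ennreal_mult qv_nonneg)
  also have "\<dots> = (\<integral>\<^sup>+u. ennreal (qv V (w1 - a * u)) * ennreal (qv (V + (cmod a)^2) w2) \<partial>cn_std)"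
    by (intro nn_integral_cong) (simp add: nn_integral_cmult qmix[OF V])
  also have "\<dots> = ennreal (qv (V + (cmod a)^2) w1) * ennreal (qv (V + (cmod a)^2) w2)"
    by (simp add: nn_integral_multc qmix[OF V])
  also have "\<dots> = ennreal (qv (V + (cmod a)^2) w1 * qv (V + (cmod a)^2) w2)"
    using V by (simp add: ennreal_mult qv_nonneg add_pos_nonneg)
  finally show ?thesis .
qed

lemma alg1:
  fixes V W k A B :: real
  assumes V: "V > 0" and W: "W > 0" and k: "W = V + 2 * k"
  shows "- ((A + B) / 2) / V + k * B / (V * W) = - (A / 2) / V - (B / 2) / W"
proof -
  have k': "k = (W - V) / 2" using k by simp
  have "k * B / (V * W) = (B / 2) / V - (B / 2) / W"
    unfolding k' using V W by (simp add: field_simps)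
  then show ?thesis by (simp add: diff_divide_distrib add_divide_distrib)
qed

definition DR :: "real \<Rightarrow> real \<Rightarrow> real \<Rightarrow> complex \<Rightarrow> complex \<times> complex \<Rightarrow> real" where
  "DR c1 c2 \<sigma> e y = Ifun (c2^2 / \<sigma>^2) ((c2^2 + 2 * c1^2) / \<sigma>^2)
       ((cmod (snd y - fst y * e))^2 / (2 * \<sigma>^2)) ((cmod (snd y + fst y * e))^2 / (2 * \<sigma>^2)) 1 / (pi^2 * \<sigma>^4)"

definition Phi :: "real \<Rightarrow> real \<Rightarrow> real \<Rightarrow> complex \<Rightarrow> complex \<times> complex \<Rightarrow> real \<Rightarrow> real" where
  "Phi c1 c2 \<sigma> e y x = 1 / (pi^2 * (\<sigma>^2 + c2^2 * x) * ((\<sigma>^2 + c2^2 * x) + 2 * (c1^2 * x))) *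
     exp (- ((cmod (fst y))^2 + (cmod (snd y))^2) / (\<sigma>^2 + c2^2 * x)
          + c1^2 * x * (cmod (snd y + e * fst y))^2 / ((\<sigma>^2 + c2^2 * x) * ((\<sigma>^2 + c2^2 * x) + 2 * (c1^2 * x))))"

lemma borel_measurable_Phi[measurable]: "Phi c1 c2 \<sigma> e y \<in> borel_measurable borel"
  unfolding Phi_def by measurable

lemma Phi_Ifn:
  assumes c1: "c1 > 0" and c2: "c2 > 0" and s: "\<sigma> > 0" and e: "cmod e = 1" and x: "x \<ge> 0"
  shows "exp (- x) * Phi c1 c2 \<sigma> e y x = Ifn (c2^2 / \<sigma>^2) ((c2^2 + 2 * c1^2) / \<sigma>^2)
       ((cmod (snd y - fst y * e))^2 / (2 * \<sigma>^2)) ((cmod (snd y + fst y * e))^2 / (2 * \<sigma>^2)) x / (pi^2 * \<sigma>^4)"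
proof -
  define V where "V = \<sigma>^2 + c2^2 * x"
  define W where "W = V + 2 * (c1^2 * x)"
  define A where "A = (cmod (snd y - fst y * e))^2"
  define B where "B = (cmod (snd y + fst y * e))^2"
  define e1 where "e1 = c2^2 / \<sigma>^2"
  define e2 where "e2 = (c2^2 + 2 * c1^2) / \<sigma>^2"
  have V: "V > 0" unfolding V_def using s x c2 by (simp add: add_pos_nonneg)
  have W: "W > 0" unfolding W_def using V x by (simp add: add_pos_nonneg)
  have Ve: "V = \<sigma>^2 * (1 + e1 * x)" unfolding V_def e1_def using s by (simp add: field_simps)
  have We: "W = \<sigma>^2 * (1 + e2 * x)" unfolding W_def V_def e2_def using s by (simp add: field_simps)
  have par: "(cmod (fst y))^2 + (cmod (snd y))^2 = (A + B) / 2"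
    unfolding A_def B_def cmod_add_sq cmod_diff_sq2 using e by (simp add: norm_mult)
  have B': "(cmod (snd y + e * fst y))^2 = B" unfolding B_def by (simp add: mult.commute)
  have ex: "- ((A + B) / 2) / V + c1^2 * x * B / (V * W) = - (A / (2 * \<sigma>^2)) / (1 + e1 * x) - (B / (2 * \<sigma>^2)) / (1 + e2 * x)"
  proof -
    have "- ((A + B) / 2) / V + c1^2 * x * B / (V * W) = - (A / 2) / V - (B / 2) / W"
      by (rule alg1[OF V W]) (simp add: W_def)
    also have "\<dots> = - (A / (2 * \<sigma>^2)) / (1 + e1 * x) - (B / (2 * \<sigma>^2)) / (1 + e2 * x)"
      unfolding Ve We by (simp add: field_simps)
    finally show ?thesis .
  qed
  have p1: "1 + e1 * x > 0" "1 + e2 * x > 0"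
    using Ve We V W s by (auto simp: zero_less_mult_iff)
  have "exp (- x) * Phi c1 c2 \<sigma> e y x
      = exp (- x) * (1 / (pi^2 * V * W)) * exp (- ((A + B) / 2) / V + c1^2 * x * B / (V * W))"
    unfolding Phi_def V_def[symmetric] W_def[symmetric] par B' by (simp add: minus_divide_left)
  also have "\<dots> = exp (- (x + (A / (2 * \<sigma>^2)) / (1 + e1 * x) + (B / (2 * \<sigma>^2)) / (1 + e2 * x))) / (pi^2 * \<sigma>^4 * ((1 + e1 * x) * (1 + e2 * x)))"
  proof -
    have pre: "pi^2 * V * W = pi^2 * \<sigma>^4 * ((1 + e1 * x) * (1 + e2 * x))"
      unfolding Ve We by (simp add: algebra_simps power4_eq_xxxx power2_eq_square)
    have arg: "- x + (- (A / (2 * \<sigma>^2)) / (1 + e1 * x) - (B / (2 * \<sigma>^2)) / (1 + e2 * x))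
        = - (x + (A / (2 * \<sigma>^2)) / (1 + e1 * x) + (B / (2 * \<sigma>^2)) / (1 + e2 * x))" by simp
    have "exp (- x) * exp (- (A / (2 * \<sigma>^2)) / (1 + e1 * x) - (B / (2 * \<sigma>^2)) / (1 + e2 * x))
        = exp (- (x + (A / (2 * \<sigma>^2)) / (1 + e1 * x) + (B / (2 * \<sigma>^2)) / (1 + e2 * x)))"
      unfolding exp_add[symmetric] arg ..
    then show ?thesis unfolding ex pre by (simp add: mult_ac)
  qed
  also have "\<dots> = Ifn e1 e2 (A / (2 * \<sigma>^2)) (B / (2 * \<sigma>^2)) x / (pi^2 * \<sigma>^4)"
    unfolding Ifn_def using p1 by (simp add: mult_ac)
  finally show ?thesis unfolding e1_def e2_def A_def B_def .
qed



lemma h2int: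
  assumes c1: "c1 > 0" and c2: "c2 > 0" and s: "\<sigma> > 0" and e: "cmod e = 1"
  shows "(\<integral>\<^sup>+h. ennreal (Phi c1 c2 \<sigma> e y ((cmod h)^2)) \<partial>cn_std) = ennreal (DR c1 c2 \<sigma> e y)"
proof -
  define e1 where "e1 = c2^2 / \<sigma>^2"
  define e2 where "e2 = (c2^2 + 2 * c1^2) / \<sigma>^2"
  define b1 where "b1 = (cmod (snd y - fst y * e))^2 / (2 * \<sigma>^2)"
  define b2 where "b2 = (cmod (snd y + fst y * e))^2 / (2 * \<sigma>^2)"
  have nn: "e1 \<ge> 0" "e2 \<ge> 0" "b1 \<ge> 0" "b2 \<ge> 0" unfolding e1_def e2_def b1_def b2_def by auto
  have PI: "exp (- x) * Phi c1 c2 \<sigma> e y x = Ifn e1 e2 b1 b2 x / (pi^2 * \<sigma>^4)" if "x \<ge> 0" for x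
    unfolding e1_def e2_def b1_def b2_def by (rule Phi_Ifn[OF c1 c2 s e that])
  have Ppos: "Phi c1 c2 \<sigma> e y x \<ge> 0" if "x \<ge> 0" for x
  proof -
    have "exp (- x) * Phi c1 c2 \<sigma> e y x \<ge> 0"
      unfolding PI[OF that] using Ifn_bounds(1)[OF nn that] by simp
    then show ?thesis by (simp add: zero_le_mult_iff)
  qed
  have "(\<integral>\<^sup>+h. ennreal (Phi c1 c2 \<sigma> e y ((cmod h)^2)) \<partial>cn_std)
      = (\<integral>\<^sup>+h. (\<lambda>x. ennreal (exp (- x) / pi) * ennreal (Phi c1 c2 \<sigma> e y x)) ((cmod h)^2) \<partial>lborel)"
    by (subst nn_integral_cn) auto
  also have "\<dots> = (\<integral>\<^sup>+x. ennreal pi * indicator {0..} x * (ennreal (exp (- x) / pi) * ennreal (Phi c1 c2 \<sigma> e y x)) \<partial>lborel)"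
    by (rule radial) measurable
  also have "\<dots> = (\<integral>\<^sup>+x. ennreal (1 / (pi^2 * \<sigma>^4)) * ennreal (indicator {0..} x * Ifn e1 e2 b1 b2 x) \<partial>lborel)"
  proof (intro nn_integral_cong)
    fix x :: real
    show "ennreal pi * indicator {0..} x * (ennreal (exp (- x) / pi) * ennreal (Phi c1 c2 \<sigma> e y x))
        = ennreal (1 / (pi^2 * \<sigma>^4)) * ennreal (indicator {0..} x * Ifn e1 e2 b1 b2 x)"
    proof (cases "x \<ge> 0")
      case True
      have "pi * (exp (- x) / pi * Phi c1 c2 \<sigma> e y x) = 1 / (pi^2 * \<sigma>^4) * Ifn e1 e2 b1 b2 x"
        using PI[OF True] by simp
      then show ?thesis using True Ppos[OF True] Ifn_bounds(1)[OF nn True]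
        by (simp add: ennreal_mult[symmetric] mult.assoc[symmetric] del: ennreal_mult)
    qed simp
  qed
  also have "\<dots> = ennreal (1 / (pi^2 * \<sigma>^4)) * ennreal (Ifun e1 e2 b1 b2 1)"
    by (subst nn_integral_cmult) (auto simp: nn_Ifn(1)[OF nn])
  also have "\<dots> = ennreal (DR c1 c2 \<sigma> e y)"
    unfolding DR_def e1_def[symmetric] e2_def[symmetric] b1_def[symmetric] b2_def[symmetric]
    using nn_Ifn(2)[OF nn] by (simp add: ennreal_mult[symmetric])
  finally show ?thesis .
qed



lemma relay_link:
  fixes c1 c2 \<sigma> :: real and s0 e :: complex
  assumes c1: "c1 > 0" and c2: "c2 > 0" and s: "\<sigma> > 0" and s0: "cmod s0 = 1" and e: "cmod e = 1"
  shows "distr link_noise lborel (\<lambda>(h1,h2,n1,n2). csc (complex_of_real c1 * h1 * h2) (s0, s0*e)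
              + csc (complex_of_real c2 * h2) n1 + csc (complex_of_real \<sigma>) n2)
       = density lborel (\<lambda>y. ennreal (DR c1 c2 \<sigma> e y))"
proof -
  interpret C: prob_space cn_std by (rule prob_space_cn)
  interpret C2: prob_space "cn_std \<Otimes>\<^sub>M cn_std" by (rule prob_space_cn2)
  interpret LC: pair_sigma_finite lborel cn_std
    by (simp add: pair_sigma_finite_def C.sigma_finite_measure_axioms lborel.sigma_finite_measure_axioms)
  interpret LC2: pair_sigma_finite lborel "cn_std \<Otimes>\<^sub>M cn_std"
    by (simp add: pair_sigma_finite_def C2.sigma_finite_measure_axioms lborel.sigma_finite_measure_axioms)
  interpret CC: pair_sigma_finite cn_std cn_std
    by (simp add: pair_sigma_finite_def C.sigma_finite_measure_axioms)
  define mu where "mu h1 h2 n1 = (complex_of_real c1 * h2 * s0 * h1 + complex_of_real c2 * h2 * fst n1,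
                                   complex_of_real c1 * h2 * s0 * e * h1 + complex_of_real c2 * h2 * snd n1)" for h1 h2 :: complex and n1 :: "complex \<times> complex"
  define F where "F = (\<lambda>(h1,h2,n1,n2). csc (complex_of_real c1 * h1 * h2) (s0, s0*e)
              + csc (complex_of_real c2 * h2) n1 + csc (complex_of_real \<sigma>) n2)"
  have Fe: "F (h1,h2,n1,n2) = mu h1 h2 n1 + \<sigma> *\<^sub>R n2" for h1 h2 n1 n2
    by (cases n1, cases n2) (simp add: F_def csc_def mu_def scaleR_conv_of_real algebra_simps)
  let ?Q = "\<lambda>y h1 h2 n1. ennreal (qv (\<sigma>^2) (fst y - fst (mu h1 h2 n1)) * qv (\<sigma>^2) (snd y - snd (mu h1 h2 n1)))"
  have "distr link_noise lborel F = density lborel (\<lambda>y. ennreal (DR c1 c2 \<sigma> e y))"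
  proof (rule distr_eq_densityI)
    have "F = (\<lambda>\<omega>. (complex_of_real c1 * fst (snd \<omega>) * s0 * fst \<omega> + complex_of_real c2 * fst (snd \<omega>) * fst (fst (snd (snd \<omega>))) + complex_of_real \<sigma> * fst (snd (snd (snd \<omega>))),
                        complex_of_real c1 * fst (snd \<omega>) * s0 * e * fst \<omega> + complex_of_real c2 * fst (snd \<omega>) * snd (fst (snd (snd \<omega>))) + complex_of_real \<sigma> * snd (snd (snd (snd \<omega>)))))"
      by (auto simp: fun_eq_iff Fe mu_def scaleR_conv_of_real)
    also have "\<dots> \<in> measurable link_noise borel" by measurable
    finally show "F \<in> measurable link_noise borel" .
    show "(\<lambda>y. ennreal (DR c1 c2 \<sigma> e y)) \<in> borel_measurable borel" unfolding DR_def Ifun_def set_lebesgue_integral_def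
      by measurable
    fix \<psi> :: "complex \<times> complex \<Rightarrow> ennreal" assume [measurable]: "\<psi> \<in> borel_measurable borel"
    have "(\<integral>\<^sup>+\<omega>. \<psi> (F \<omega>) \<partial>link_noise)
        = (\<integral>\<^sup>+h1. \<integral>\<^sup>+h2. \<integral>\<^sup>+n1. \<integral>\<^sup>+n2. \<psi> (mu h1 h2 n1 + \<sigma> *\<^sub>R n2) \<partial>(cn_std \<Otimes>\<^sub>M cn_std) \<partial>(cn_std \<Otimes>\<^sub>M cn_std) \<partial>cn_std \<partial>cn_std)"
      by (subst nn_integral_link) (simp_all add: Fe, use \<open>F \<in> measurable link_noise borel\<close> in measurable)
    also have "\<dots> = (\<integral>\<^sup>+h1. \<integral>\<^sup>+h2. \<integral>\<^sup>+n1. \<integral>\<^sup>+y. ?Q y h1 h2 n1 * \<psi> y \<partial>lborel \<partial>(cn_std \<Otimes>\<^sub>M cn_std) \<partial>cn_std \<partial>cn_std)"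
      by (intro nn_integral_cong) (simp add: cn2_affine s)
    also have "\<dots> = (\<integral>\<^sup>+h1. \<integral>\<^sup>+h2. \<integral>\<^sup>+y. \<integral>\<^sup>+n1. ?Q y h1 h2 n1 * \<psi> y \<partial>(cn_std \<Otimes>\<^sub>M cn_std) \<partial>lborel \<partial>cn_std \<partial>cn_std)"
      by (intro nn_integral_cong LC2.Fubini') (simp add: mu_def, measurable)
    also have "\<dots> = (\<integral>\<^sup>+h1. \<integral>\<^sup>+h2. \<integral>\<^sup>+y. (\<integral>\<^sup>+n1. ?Q y h1 h2 n1 \<partial>(cn_std \<Otimes>\<^sub>M cn_std)) * \<psi> y \<partial>lborel \<partial>cn_std \<partial>cn_std)"
      by (intro nn_integral_cong nn_integral_multc) (simp add: mu_def, measurable)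
    also have "\<dots> = (\<integral>\<^sup>+h1. \<integral>\<^sup>+y. \<integral>\<^sup>+h2. (\<integral>\<^sup>+n1. ?Q y h1 h2 n1 \<partial>(cn_std \<Otimes>\<^sub>M cn_std)) * \<psi> y \<partial>cn_std \<partial>lborel \<partial>cn_std)"
      by (intro nn_integral_cong LC.Fubini') (simp add: mu_def, measurable)
    also have "\<dots> = (\<integral>\<^sup>+y. \<integral>\<^sup>+h1. \<integral>\<^sup>+h2. (\<integral>\<^sup>+n1. ?Q y h1 h2 n1 \<partial>(cn_std \<Otimes>\<^sub>M cn_std)) * \<psi> y \<partial>cn_std \<partial>cn_std \<partial>lborel)"
      by (rule LC.Fubini') (simp add: mu_def, measurable)
    also have "\<dots> = (\<integral>\<^sup>+y. (\<integral>\<^sup>+h1. \<integral>\<^sup>+h2. \<integral>\<^sup>+n1. ?Q y h1 h2 n1 \<partial>(cn_std \<Otimes>\<^sub>M cn_std) \<partial>cn_std \<partial>cn_std) * \<psi> y \<partial>lborel)"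
    proof (intro nn_integral_cong)
      fix y :: "complex \<times> complex"
      have "(\<integral>\<^sup>+h1. \<integral>\<^sup>+h2. (\<integral>\<^sup>+n1. ?Q y h1 h2 n1 \<partial>(cn_std \<Otimes>\<^sub>M cn_std)) * \<psi> y \<partial>cn_std \<partial>cn_std)
          = (\<integral>\<^sup>+h1. (\<integral>\<^sup>+h2. \<integral>\<^sup>+n1. ?Q y h1 h2 n1 \<partial>(cn_std \<Otimes>\<^sub>M cn_std) \<partial>cn_std) * \<psi> y \<partial>cn_std)"
        by (intro nn_integral_cong nn_integral_multc) (simp add: mu_def, measurable)
      also have "\<dots> = (\<integral>\<^sup>+h1. \<integral>\<^sup>+h2. \<integral>\<^sup>+n1. ?Q y h1 h2 n1 \<partial>(cn_std \<Otimes>\<^sub>M cn_std) \<partial>cn_std \<partial>cn_std) * \<psi> y"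
        by (rule nn_integral_multc) (simp add: mu_def, measurable)
      finally show "(\<integral>\<^sup>+h1. \<integral>\<^sup>+h2. (\<integral>\<^sup>+n1. ?Q y h1 h2 n1 \<partial>(cn_std \<Otimes>\<^sub>M cn_std)) * \<psi> y \<partial>cn_std \<partial>cn_std)
          = (\<integral>\<^sup>+h1. \<integral>\<^sup>+h2. \<integral>\<^sup>+n1. ?Q y h1 h2 n1 \<partial>(cn_std \<Otimes>\<^sub>M cn_std) \<partial>cn_std \<partial>cn_std) * \<psi> y" .
    qed
    also have "\<dots> = (\<integral>\<^sup>+y. ennreal (DR c1 c2 \<sigma> e y) * \<psi> y \<partial>lborel)"
    proof (intro nn_integral_cong arg_cong2[where f="(*)"] refl)
      fix y :: "complex \<times> complex"
      have "(\<integral>\<^sup>+h1. \<integral>\<^sup>+h2. \<integral>\<^sup>+n1. ?Q y h1 h2 n1 \<partial>(cn_std \<Otimes>\<^sub>M cn_std) \<partial>cn_std \<partial>cn_std)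
          = (\<integral>\<^sup>+h2. \<integral>\<^sup>+h1. \<integral>\<^sup>+n1. ?Q y h1 h2 n1 \<partial>(cn_std \<Otimes>\<^sub>M cn_std) \<partial>cn_std \<partial>cn_std)"
        by (rule CC.Fubini') (simp add: mu_def, measurable)
      also have "\<dots> = (\<integral>\<^sup>+h2. ennreal (Phi c1 c2 \<sigma> e y ((cmod h2)^2)) \<partial>cn_std)"
      proof (intro nn_integral_cong)
        fix h2 :: complex
        define V where "V = \<sigma>^2 + (cmod (complex_of_real c2 * h2))^2"
        define a1 where "a1 = complex_of_real c1 * h2 * s0"
        define a2 where "a2 = complex_of_real c1 * h2 * s0 * e"
        have V: "V > 0" unfolding V_def using s by (simp add: add_pos_nonneg)
        have s2: "\<sigma>^2 > 0" using s by simp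
        have mq1: "fst y - fst (mu h1 h2 n1) = (fst y - a1 * h1) - complex_of_real c2 * h2 * fst n1" for h1 n1
          unfolding mu_def a1_def by (simp add: algebra_simps)
        have mq2: "snd y - snd (mu h1 h2 n1) = (snd y - a2 * h1) - complex_of_real c2 * h2 * snd n1" for h1 n1
          unfolding mu_def a2_def by (simp add: algebra_simps)
        have "(\<integral>\<^sup>+h1. \<integral>\<^sup>+n1. ?Q y h1 h2 n1 \<partial>(cn_std \<Otimes>\<^sub>M cn_std) \<partial>cn_std)
            = (\<integral>\<^sup>+h1. ennreal (qv V (fst y - a1 * h1) * qv V (snd y - a2 * h1)) \<partial>cn_std)"
          unfolding mq1 mq2 V_def by (intro nn_integral_cong n1int s2)
        also have "\<dots> = ennreal (Phi c1 c2 \<sigma> e y ((cmod h2)^2))"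
        proof -
          have ca: "cmod a2 = cmod a1" using e by (simp add: a2_def a1_def norm_mult)
          have cV: "V = \<sigma>^2 + c2^2 * (cmod h2)^2" unfolding V_def using c2
            by (simp del: of_real_mult add: norm_mult power_mult_distrib)
          have ca1: "(cmod a1)^2 = c1^2 * (cmod h2)^2" using s0 c1
            by (simp del: of_real_mult add: a1_def norm_mult power_mult_distrib)
          have U: "(cmod (cnj a1 * fst y + cnj a2 * snd y))^2 = c1^2 * (cmod h2)^2 * (cmod (snd y + e * fst y))^2"
          proof -
            have "(cmod (cnj a1 * fst y + cnj a2 * snd y))^2 = (cmod (complex_of_real c1 * h2))^2 * (cmod (snd y + e * fst y))^2"
              unfolding a2_def a1_def by (rule normU[OF s0 e])
            then show ?thesis using c1 by (simp del: of_real_mult add: norm_mult power_mult_distrib)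
          qed
          show ?thesis unfolding gC[OF V ca] unfolding U ca1 cV Phi_def by (simp add: mult.assoc)
        qed
        finally show "(\<integral>\<^sup>+h1. \<integral>\<^sup>+n1. ?Q y h1 h2 n1 \<partial>(cn_std \<Otimes>\<^sub>M cn_std) \<partial>cn_std)
            = ennreal (Phi c1 c2 \<sigma> e y ((cmod h2)^2))" .
      qed
      also have "\<dots> = ennreal (DR c1 c2 \<sigma> e y)"
        by (rule h2int[OF c1 c2 s e])
      finally show "(\<integral>\<^sup>+h1. \<integral>\<^sup>+h2. \<integral>\<^sup>+n1. ?Q y h1 h2 n1 \<partial>(cn_std \<Otimes>\<^sub>M cn_std) \<partial>cn_std \<partial>cn_std) = ennreal (DR c1 c2 \<sigma> e y)" .
    qed
    finally show "(\<integral>\<^sup>+\<omega>. \<psi> (F \<omega>) \<partial>link_noise) = (\<integral>\<^sup>+y. ennreal (DR c1 c2 \<sigma> e y) * \<psi> y \<partial>lborel)" .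
  qed
  then show ?thesis unfolding F_def .
qed



lemma distr_PiM_prod:
  fixes G :: "'i \<Rightarrow> 'a \<Rightarrow> 'b::euclidean_space"
  assumes I: "finite I" and L: "prob_space L" and G[measurable]: "\<And>i. G i \<in> measurable L borel"
  shows "distr (PiM I (\<lambda>_. L)) (PiM I (\<lambda>_. lborel)) (\<lambda>\<omega>. \<lambda>i\<in>I. G i (\<omega> i)) = PiM I (\<lambda>i. distr L lborel (G i))"
proof -
  interpret L: prob_space L by fact
  interpret PL: product_prob_space "\<lambda>_. L" by unfold_locales
  have pd: "prob_space (distr L lborel (G i))" for i by (rule L.prob_space_distr) simp
  interpret N: product_sigma_finite "\<lambda>i. distr L lborel (G i)"
    unfolding product_sigma_finite_def using pd prob_space_imp_sigma_finite by blast
  have Fm: "(\<lambda>\<omega>. \<lambda>i\<in>I. G i (\<omega> i)) \<in> measurable (PiM I (\<lambda>_. L)) (PiM I (\<lambda>_. lborel))"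
    by (rule measurable_restrict) measurable
  show ?thesis
  proof (rule N.PiM_eqI[OF I])
    show "sets (distr (PiM I (\<lambda>_. L)) (PiM I (\<lambda>_. lborel)) (\<lambda>\<omega>. \<lambda>i\<in>I. G i (\<omega> i))) = sets (PiM I (\<lambda>i. distr L lborel (G i)))"
      by (simp cong: sets_PiM_cong)
    fix A assume A: "\<And>i. i \<in> I \<Longrightarrow> A i \<in> sets (distr L lborel (G i))"
    then have A': "\<And>i. i \<in> I \<Longrightarrow> A i \<in> sets borel" by simp
    have pre: "(\<lambda>\<omega>. \<lambda>i\<in>I. G i (\<omega> i)) -` PiE I A \<inter> space (PiM I (\<lambda>_. L)) = PiE I (\<lambda>i. G i -` A i \<inter> space L)"
      by (auto simp: space_PiM PiE_iff)
    have "emeasure (distr (PiM I (\<lambda>_. L)) (PiM I (\<lambda>_. lborel)) (\<lambda>\<omega>. \<lambda>i\<in>I. G i (\<omega> i))) (PiE I A)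
        = emeasure (PiM I (\<lambda>_. L)) (PiE I (\<lambda>i. G i -` A i \<inter> space L))"
      using A' by (subst emeasure_distr[OF Fm]) (auto simp: pre sets_PiM_I_finite I)
    also have "\<dots> = (\<Prod>i\<in>I. emeasure L (G i -` A i \<inter> space L))"
      using A' by (intro PL.emeasure_PiM I) (auto intro: measurable_sets)
    also have "\<dots> = (\<Prod>i\<in>I. emeasure (distr L lborel (G i)) (A i))"
      using A' by (intro prod.cong refl) (simp add: emeasure_distr)
    finally show "emeasure (distr (PiM I (\<lambda>_. L)) (PiM I (\<lambda>_. lborel)) (\<lambda>\<omega>. \<lambda>i\<in>I. G i (\<omega> i))) (PiE I A)
        = (\<Prod>i\<in>I. emeasure (distr L lborel (G i)) (A i))" .
  qed
qed

lemma indicator_PiE_prod: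
  assumes "x \<in> extensional I" "finite I"
  shows "(indicator (PiE I A) x :: ennreal) = (\<Prod>i\<in>I. indicator (A i) (x i))"
proof (cases "\<forall>i\<in>I. x i \<in> A i")
  case True
  then show ?thesis using assms by (simp add: indicator_def PiE_iff)
next
  case False
  then obtain i where "i \<in> I" "x i \<notin> A i" by auto
  then show ?thesis using assms by (auto simp: indicator_def PiE_iff prod_zero_iff)
qed

lemma PiM_density_prod:
  fixes d :: "'i \<Rightarrow> 'b::euclidean_space \<Rightarrow> ennreal"
  assumes I: "finite I" and d[measurable]: "\<And>i. d i \<in> borel_measurable borel"
    and sf: "\<And>i. sigma_finite_measure (density lborel (d i))"
  shows "PiM I (\<lambda>i. density lborel (d i)) = density (PiM I (\<lambda>_. lborel)) (\<lambda>y. \<Prod>i\<in>I. d i (y i))"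
proof -
  interpret D: product_sigma_finite "\<lambda>i. density lborel (d i)"
    unfolding product_sigma_finite_def using sf by blast
  interpret LB: product_sigma_finite "\<lambda>_. lborel :: 'b measure"
    unfolding product_sigma_finite_def by (simp add: lborel.sigma_finite_measure_axioms)
  show ?thesis
  proof (rule D.PiM_eqI[OF I, symmetric])
    show "sets (density (PiM I (\<lambda>_. lborel)) (\<lambda>y. \<Prod>i\<in>I. d i (y i))) = sets (PiM I (\<lambda>i. density lborel (d i)))"
      by (simp cong: sets_PiM_cong)
    fix A assume A: "\<And>i. i \<in> I \<Longrightarrow> A i \<in> sets (density lborel (d i))"
    then have [measurable]: "\<And>i. i \<in> I \<Longrightarrow> A i \<in> sets borel" by simp
    have PA: "PiE I A \<in> sets (PiM I (\<lambda>_. lborel :: 'b measure))"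
      using A by (intro sets_PiM_I_finite I) auto
    have "emeasure (density (PiM I (\<lambda>_. lborel)) (\<lambda>y. \<Prod>i\<in>I. d i (y i))) (PiE I A)
        = (\<integral>\<^sup>+y. (\<Prod>i\<in>I. d i (y i)) * indicator (PiE I A) y \<partial>PiM I (\<lambda>_. lborel))"
      using PA by (subst emeasure_density) auto
    also have "\<dots> = (\<integral>\<^sup>+y. (\<Prod>i\<in>I. d i (y i) * indicator (A i) (y i)) \<partial>PiM I (\<lambda>_. lborel))"
      by (intro nn_integral_cong) (auto simp: indicator_PiE_prod I space_PiM PiE_iff prod.distrib)
    also have "\<dots> = (\<Prod>i\<in>I. (\<integral>\<^sup>+x. d i x * indicator (A i) x \<partial>lborel))"
      by (rule LB.product_nn_integral_prod[OF I]) measurable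
    also have "\<dots> = (\<Prod>i\<in>I. emeasure (density lborel (d i)) (A i))"
      by (intro prod.cong refl) (subst emeasure_density, auto)
    finally show "emeasure (density (PiM I (\<lambda>_. lborel)) (\<lambda>y. \<Prod>i\<in>I. d i (y i))) (PiE I A) = (\<Prod>i\<in>I. emeasure (density lborel (d i)) (A i))" .
  qed
qed



lemma prob_space_link: "prob_space link_noise"
proof -
  interpret C: prob_space cn_std by (rule prob_space_cn)
  interpret C2: prob_space "cn_std \<Otimes>\<^sub>M cn_std" by (rule prob_space_cn2)
  interpret C22: prob_space "(cn_std \<Otimes>\<^sub>M cn_std) \<Otimes>\<^sub>M (cn_std \<Otimes>\<^sub>M cn_std)"
    by (intro prob_space_pair) (auto simp: pair_prob_space_def pair_sigma_finite_def C2.prob_space_axioms prob_space_cn)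
  show ?thesis unfolding link_noise_def
    by (intro prob_space_pair) (auto simp: pair_prob_space_def pair_sigma_finite_def C22.prob_space_axioms C.prob_space_axioms prob_space_cn)
qed

lemma meas_direct:
  "(\<lambda>(h1,h2,n1,n2). csc (complex_of_real s) (csc (complex_of_real (sqrt g) * h1) (s0, s0*e) + n1)) \<in> measurable link_noise borel"
proof -
  have "(\<lambda>(h1,h2,n1,n2). csc (complex_of_real s) (csc (complex_of_real (sqrt g) * h1) (s0, s0*e) + n1))
      = (\<lambda>\<omega>. (complex_of_real s * (complex_of_real (sqrt g) * fst \<omega> * s0 + fst (fst (snd (snd \<omega>)))),
               complex_of_real s * (complex_of_real (sqrt g) * fst \<omega> * (s0 * e) + snd (fst (snd (snd \<omega>))))))"
    by (auto simp: fun_eq_iff csc_def)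
  also have "\<dots> \<in> measurable link_noise borel" by measurable
  finally show ?thesis .
qed

lemma meas_relay:
  "(\<lambda>(h1,h2,n1,n2). csc (complex_of_real c1 * h1 * h2) (s0, s0*e)
              + csc (complex_of_real c2 * h2) n1 + csc (complex_of_real \<sigma>) n2) \<in> measurable link_noise borel"
proof -
  have "(\<lambda>(h1,h2,n1,n2). csc (complex_of_real c1 * h1 * h2) (s0, s0*e)
              + csc (complex_of_real c2 * h2) n1 + csc (complex_of_real \<sigma>) n2)
      = (\<lambda>\<omega>. (complex_of_real c1 * fst \<omega> * fst (snd \<omega>) * s0 + complex_of_real c2 * fst (snd \<omega>) * fst (fst (snd (snd \<omega>))) + complex_of_real \<sigma> * fst (snd (snd (snd \<omega>))),
               complex_of_real c1 * fst \<omega> * fst (snd \<omega>) * (s0 * e) + complex_of_real c2 * fst (snd \<omega>) * snd (fst (snd (snd \<omega>))) + complex_of_real \<sigma> * snd (snd (snd (snd \<omega>)))))"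
    by (auto simp: fun_eq_iff csc_def)
  also have "\<dots> \<in> measurable link_noise borel" by measurable
  finally show ?thesis .
qed

lemma borel_measurable_DR[measurable]: "DR c1 c2 \<sigma> e \<in> borel_measurable borel"
  unfolding DR_def Ifun_def set_lebesgue_integral_def by measurable

lemma D0_split:
  assumes g: "g > 0" and s: "s > 0"
  shows "D0 g s e y = (1 / (pi^2 * s^4 * (1 + 2*g)) *
     exp (- ((cmod (fst y))^2 + (cmod (snd y))^2) / s^2 + g * ((cmod (fst y))^2 + (cmod (snd y))^2) / (s^2 * (1 + 2*g))))
     * exp (2 * g / (1 + 2 * g) * Re (fst y * cnj (snd y) * e) / s^2)"
proof -
  define a where "a = (cmod (fst y))^2 + (cmod (snd y))^2"
  define R where "R = Re (fst y * cnj (snd y) * e)"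
  have g1: "1 + 2*g > 0" using g by simp
  have e1: "g * (a + 2 * R) / (s^2 * (1 + 2*g)) = g * a / (s^2 * (1 + 2*g)) + (g * (2 * R)) / (s^2 * (1 + 2*g))"
    by (simp add: distrib_left add_divide_distrib)
  have e2: "(g * (2 * R)) / (s^2 * (1 + 2*g)) = 2 * g / (1 + 2 * g) * R / s^2"
    by (simp add: mult_ac)
  have "g * (a + 2 * R) / (s^2 * (1 + 2*g)) = g * a / (s^2 * (1 + 2*g)) + 2 * g / (1 + 2 * g) * R / s^2"
    using e1 e2 by simp
  then have ex: "- a / s^2 + g * (a + 2 * R) / (s^2 * (1 + 2*g)) = (- a / s^2 + g * a / (s^2 * (1 + 2*g))) + 2 * g / (1 + 2 * g) * R / s^2"
    by simp
  show ?thesis unfolding D0_def a_def[symmetric] R_def[symmetric] ex exp_add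
    by (simp add: mult_ac)
qed

lemma D0_pos: "g > 0 \<Longrightarrow> s > 0 \<Longrightarrow> D0 g s e y > 0"
  unfolding D0_def by (simp add: add_pos_pos)

lemma DR_pos: "\<sigma> > 0 \<Longrightarrow> DR c1 c2 \<sigma> e y > 0"
  unfolding DR_def using nn_Ifn(2)[of "c2^2 / \<sigma>^2" "(c2^2 + 2 * c1^2) / \<sigma>^2"
       "(cmod (snd y - fst y * e))^2 / (2 * \<sigma>^2)" "(cmod (snd y + fst y * e))^2 / (2 * \<sigma>^2)"]
  by simp



theorem theorem1:
  fixes M K :: nat and s0 :: complex and g0d s0d :: real
    and g0r s0r grd srd :: "nat \<Rightarrow> real"
    and f :: "nat \<Rightarrow> (nat \<Rightarrow> complex \<times> complex) \<Rightarrow> ennreal"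
  assumes "M \<ge> 2" and "K \<ge> 1" and "cmod s0 = 1"
    and "g0d > 0" and "s0d > 0"
    and "\<forall>r\<in>{1..K}. g0r r > 0 \<and> s0r r > 0 \<and> grd r > 0 \<and> srd r > 0"
    and "\<forall>m<M. f m \<in> borel_measurable (PiM {0..K} (\<lambda>_. lborel))"
    and "\<forall>m<M. distr (PiM {0..K} (\<lambda>_. link_noise)) (PiM {0..K} (\<lambda>_. lborel))
                     (obs M K s0 g0d s0d g0r s0r grd srd m)
               = density (PiM {0..K} (\<lambda>_. lborel)) (f m)"
  shows "AE y in PiM {0..K} (\<lambda>_. lborel).
           {m \<in> {0..<M}. \<forall>m'\<in>{0..<M}. f m' y \<le> f m y}
         = {m \<in> {0..<M}. \<forall>m'\<in>{0..<M}.
              metric M K g0d s0d g0r s0r grd srd m' y \<le> metric M K g0d s0d g0r s0r grd srd m y}"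
proof -
  note s0 = assms(3) and g0d = assms(4) and s0d = assms(5)
  have par: "g0r r > 0" "s0r r > 0" "grd r > 0" "srd r > 0" if "r \<in> {1..K}" for r
    using assms(6) that by auto
  define ec where "ec m = cis (2 * pi * real m / real M)" for m :: nat
  have ec1: "cmod (ec m) = 1" for m unfolding ec_def by simp
  define c1 where "c1 i = s0r i * srd i * sqrt (g0r i * grd i)" for i
  define c2 where "c2 i = s0r i * srd i * sqrt (grd i)" for i
  define G where "G m i = (\<lambda>(h1::complex, h2::complex, n1::complex \<times> complex, n2::complex \<times> complex).
      if i = 0 then csc (complex_of_real s0d) (csc (complex_of_real (sqrt g0d) * h1) (symb M s0 m) + n1)
      else csc (complex_of_real (s0r i * srd i * sqrt (g0r i * grd i)) * h1 * h2) (symb M s0 m)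
          + csc (complex_of_real (s0r i * srd i * sqrt (grd i)) * h2) n1
          + csc (complex_of_real (srd i)) n2)" for m i
  have obsG: "obs M K s0 g0d s0d g0r s0r grd srd m = (\<lambda>\<omega>. \<lambda>i\<in>{0..K}. G m i (\<omega> i))" for m
    unfolding obs_def G_def by (simp add: fun_eq_iff)
  have symb: "symb M s0 m = (s0, s0 * ec m)" for m unfolding symb_def ec_def ..
  define dm where "dm m i y = (if i = 0 then D0 g0d s0d (ec m) y else DR (c1 i) (c2 i) (srd i) (ec m) y)" for m i y
  have Gm: "G m i \<in> measurable link_noise borel" for m i
  proof (cases "i = 0")
    case True
    then show ?thesis unfolding G_def symb using meas_direct by simp
  next
    case False
    then show ?thesis unfolding G_def symb using meas_relay by (simp del: of_real_mult)
  qed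
  have Gd: "distr link_noise lborel (G m i) = density lborel (\<lambda>y. ennreal (dm m i y))" if i: "i \<in> {0..K}" for m i
  proof (cases "i = 0")
    case True
    then show ?thesis unfolding G_def symb dm_def using direct_link[OF g0d s0d s0 ec1] by simp
  next
    case False
    then have r: "i \<in> {1..K}" using i by auto
    have "c1 i > 0" "c2 i > 0" unfolding c1_def c2_def using par[OF r] by auto
    then show ?thesis unfolding G_def symb dm_def using False relay_link[OF _ _ par(4)[OF r] s0 ec1]
      unfolding c1_def c2_def by (simp del: of_real_mult)
  qed
  have dm_pos: "dm m i y > 0" if "i \<in> {0..K}" for m i y
  proof (cases "i = 0")
    case True then show ?thesis unfolding dm_def using D0_pos[OF g0d s0d] by simp
  next
    case False
    then have r: "i \<in> {1..K}" using that by auto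
    then show ?thesis unfolding dm_def using False DR_pos[OF par(4)[OF r]] by simp
  qed
  have dm_meas[measurable]: "dm m i \<in> borel_measurable borel" for m i
    unfolding dm_def by measurable
  define gm where "gm m y = (\<Prod>i\<in>{0..K}. ennreal (dm m i (y i)))" for m y
  have main: "distr (PiM {0..K} (\<lambda>_. link_noise)) (PiM {0..K} (\<lambda>_. lborel)) (obs M K s0 g0d s0d g0r s0r grd srd m)
      = density (PiM {0..K} (\<lambda>_. lborel)) (gm m)" for m
  proof -
    define d' where "d' i = (if i \<in> {0..K} then (\<lambda>y. ennreal (dm m i y)) else (\<lambda>_. 1))" for i
    have d'm[measurable]: "d' i \<in> borel_measurable borel" for i unfolding d'_def by (cases "i \<in> {0..K}") simp_all
    have sf: "sigma_finite_measure (density lborel (d' i))" for i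
    proof (cases "i \<in> {0..K}")
      case True
      interpret L: prob_space link_noise by (rule prob_space_link)
      have "prob_space (density lborel (d' i))"
      proof -
        have "G m i \<in> measurable link_noise lborel" using Gm[of m i] by simp
        then have "prob_space (distr link_noise lborel (G m i))" by (rule L.prob_space_distr)
        then show ?thesis using True Gd[OF True, of m] by (simp add: d'_def)
      qed
      then show ?thesis by (rule prob_space_imp_sigma_finite)
    next
      case False
      then show ?thesis by (simp add: d'_def density_1 lborel.sigma_finite_measure_axioms)
    qed
    have "distr (PiM {0..K} (\<lambda>_. link_noise)) (PiM {0..K} (\<lambda>_. lborel)) (obs M K s0 g0d s0d g0r s0r grd srd m)
        = PiM {0..K} (\<lambda>i. distr link_noise lborel (G m i))"
      unfolding obsG by (rule distr_PiM_prod[OF _ prob_space_link Gm]) simp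
    also have "\<dots> = PiM {0..K} (\<lambda>i. density lborel (d' i))"
      by (intro PiM_cong refl) (simp add: Gd d'_def)
    also have "\<dots> = density (PiM {0..K} (\<lambda>_. lborel)) (\<lambda>y. \<Prod>i\<in>{0..K}. d' i (y i))"
      by (rule PiM_density_prod[OF _ d'm sf]) simp
    also have "\<dots> = density (PiM {0..K} (\<lambda>_. lborel)) (gm m)"
      by (rule arg_cong[where f="density (PiM {0..K} (\<lambda>_. lborel))"]) (auto simp: fun_eq_iff gm_def d'_def intro!: prod.cong)
    finally show ?thesis .
  qed
  interpret PL: finite_product_sigma_finite "\<lambda>_. lborel" "{0..K}"
    by unfold_locales (auto simp: lborel.sigma_finite_measure_axioms)
  have gm_meas: "gm m \<in> borel_measurable (PiM {0..K} (\<lambda>_. lborel))" for m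
  proof -
    have eq: "gm m = (\<lambda>y. \<Prod>i\<in>{0..K}. ennreal (dm m i (y i)))" by (simp add: fun_eq_iff gm_def)
    show ?thesis unfolding eq by measurable
  qed
  have AEm: "AE y in PiM {0..K} (\<lambda>_. lborel). f m y = gm m y" if "m \<in> {0..<M}" for m
  proof (rule PL.density_unique)
    show "f m \<in> borel_measurable (PiM {0..K} (\<lambda>_. lborel))" using assms(7) that by auto
    show "gm m \<in> borel_measurable (PiM {0..K} (\<lambda>_. lborel))" by (rule gm_meas)
    show "density (PiM {0..K} (\<lambda>_. lborel)) (f m) = density (PiM {0..K} (\<lambda>_. lborel)) (gm m)"
      using assms(8) that main[of m] by auto
  qed
  have AE: "AE y in PiM {0..K} (\<lambda>_. lborel). \<forall>m\<in>{0..<M}. f m y = gm m y"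
    by (rule AE_finite_allI) (auto intro: AEm)
  show ?thesis
  proof (rule eventually_mono[OF AE])
    fix y :: "nat \<Rightarrow> complex \<times> complex" assume H: "\<forall>m\<in>{0..<M}. f m y = gm m y"
    let ?met = "metric M K g0d s0d g0r s0r grd srd"
    define a where "a = (cmod (fst (y 0)))^2 + (cmod (snd (y 0)))^2"
    define C0 where "C0 = 1 / (pi^2 * s0d^4 * (1 + 2*g0d)) * exp (- a / s0d^2 + g0d * a / (s0d^2 * (1 + 2*g0d)))"
    define Cy where "Cy = C0 * (\<Prod>r\<in>{1..K}. 1 / (pi^2 * (srd r)^4))"
    have C0: "C0 > 0" unfolding C0_def using g0d s0d by (simp add: add_pos_pos)
    have "(\<Prod>r\<in>{1..K}. 1 / (pi^2 * (srd r)^4)) > 0"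
    proof (intro prod_pos)
      fix r assume "r \<in> {1..K}"
      then have "srd r > 0" by (rule par(4))
      then show "0 < 1 / (pi^2 * (srd r)^4)" by simp
    qed
    then have Cy: "Cy > 0" unfolding Cy_def using C0 by simp
    define T0 where "T0 m = 2 * g0d / (1 + 2 * g0d) * Re (fst (y 0) * cnj (snd (y 0)) * ec m) / s0d^2" for m
    define Lr where "Lr m r = ln (Ifun ((s0r r)^2 * grd r) ((1 + 2 * g0r r) * (s0r r)^2 * grd r)
                        ((cmod (snd (y r) - fst (y r) * ec m))^2 / (2 * (srd r)^2))
                        ((cmod (snd (y r) + fst (y r) * ec m))^2 / (2 * (srd r)^2))
                        1)" for m r
    have met: "?met m y = T0 m + (\<Sum>r = 1..K. Lr m r)" for m
      unfolding metric_def Let_def T0_def Lr_def ec_def ..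
    have dm0: "dm m 0 (y 0) = C0 * exp (T0 m)" for m
      unfolding dm_def C0_def T0_def a_def using D0_split[OF g0d s0d] by simp
    have dmr: "dm m r (y r) = 1 / (pi^2 * (srd r)^4) * exp (Lr m r)" if r: "r \<in> {1..K}" for m r
    proof -
      note p = par[OF r]
      have e1: "(c2 r)^2 / (srd r)^2 = (s0r r)^2 * grd r"
        unfolding c2_def using p by (simp add: power_mult_distrib)
      have e2: "((c2 r)^2 + 2 * (c1 r)^2) / (srd r)^2 = (1 + 2 * g0r r) * (s0r r)^2 * grd r"
        unfolding c2_def c1_def using p by (simp add: power_mult_distrib field_simps)
      have pos: "Ifun ((s0r r)^2 * grd r) ((1 + 2 * g0r r) * (s0r r)^2 * grd r)
                        ((cmod (snd (y r) - fst (y r) * ec m))^2 / (2 * (srd r)^2))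
                        ((cmod (snd (y r) + fst (y r) * ec m))^2 / (2 * (srd r)^2)) 1 > 0"
        using p by (intro nn_Ifn(2)) (auto intro: mult_nonneg_nonneg)
      have "r \<noteq> 0" using r by auto
      then show ?thesis unfolding dm_def DR_def e1 e2 Lr_def using pos by simp
    qed
    have key: "gm m y = ennreal (Cy * exp (?met m y))" for m
    proof -
      have "gm m y = ennreal (\<Prod>i\<in>{0..K}. dm m i (y i))"
        unfolding gm_def by (rule prod_ennreal) (rule less_imp_le, rule dm_pos)
      also have "(\<Prod>i\<in>{0..K}. dm m i (y i)) = dm m 0 (y 0) * (\<Prod>r\<in>{1..K}. dm m r (y r))"
        by (subst prod.atLeast_Suc_atMost) simp_all
      also have "(\<Prod>r\<in>{1..K}. dm m r (y r)) = (\<Prod>r\<in>{1..K}. 1 / (pi^2 * (srd r)^4) * exp (Lr m r))"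
        by (intro prod.cong refl dmr) auto
      also have "\<dots> = (\<Prod>r\<in>{1..K}. 1 / (pi^2 * (srd r)^4)) * exp (\<Sum>r = 1..K. Lr m r)"
        by (simp only: prod.distrib exp_sum[OF finite_atLeastAtMost])
      also have "dm m 0 (y 0) * ((\<Prod>r\<in>{1..K}. 1 / (pi^2 * (srd r)^4)) * exp (\<Sum>r = 1..K. Lr m r))
          = Cy * exp (?met m y)"
        unfolding dm0 met Cy_def exp_add by (simp add: mult_ac)
      finally show ?thesis .
    qed
    have cmp: "gm m' y \<le> gm m y \<longleftrightarrow> ?met m' y \<le> ?met m y" for m m'
      unfolding key using Cy by (simp add: ennreal_le_iff mult_le_cancel_left_pos)
    show "{m \<in> {0..<M}. \<forall>m'\<in>{0..<M}. f m' y \<le> f m y}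
         = {m \<in> {0..<M}. \<forall>m'\<in>{0..<M}. ?met m' y \<le> ?met m y}"
      using H cmp by auto
  qed
qed


end
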